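(* Let $\vec\ell\in\mathcal W^N_{\mathbb R}$, $p\in\mathbb C$, $\vec\xi=(\xi_1,\dots,\xi_N)\in\mathbb C^N$, and $\vec u=(u_1,\dots,u_k),\vec v=(v_1,\dots,v_k)\in(\mathbb C\setminus\{\xi_1,\dots,\xi_N\})^k$ with $u_1,\dots,u_k,v_1,\dots,v_k$ pairwise distinct. Then $$\frac{\mathcal B_{\vec\ell,p}(\vec u,\vec\xi/\vec v)}{\mathcal B_{\vec\ell}(\vec\xi)}=\frac{D(\vec u;-\vec v)}{\Delta(\vec u)\Delta(-\vec v)}\det\Big(\frac1{u_i-v_j}\frac{\mathcal B_{\vec\ell,p}(u_i,\vec\xi/v_j)}{\mathcal B_{\vec\ell}(\vec\xi)}\Big)_{i,j=1}^k.$$ Moreover, if $\xi_1,\dots,\xi_N$ are distinct and $u,v\in\mathbb C\setminus\{\xi_1,\dots,\xi_N\}$ with $u\ne v$, then $$\frac{\mathcal B_{\vec\ell,p}(u,\vec\xi/v)}{\mathcal B_{\vec\ell}(\vec\xi)}=(u-v)\prod_{i=1}^N\frac{v-\xi_i}{u-\xi_i}\Big(\frac{e^{p(u-v)}}{u-v}+\mathrm a(u)'A_{\vec\ell}(\vec\xi)^{-1}\mathrm b(v)\Big),$$ where $\mathrm a(u)=(e^{\ell_1u},\dots,e^{\ell_Nu})$, $\mathrm b(v)=\big(\frac{e^{p(\xi_1-v)}}{v-\xi_1},\dots,\frac{e^{p(\xi_N-v)}}{v-\xi_N}\big)$ are column vectors, $'$ denotes transpose, and $A_{\vec\ell}(\vec\xi)=(e^{\xi_i\ell_j})_{i,j=1}^N$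 (assumed invertible; for non-distinct $\ell$ the identities are understood by continuity).
   Context: $\Delta(\vec x)=\prod_{i<j}(x_i-x_j)$, $D(\vec x;\vec y)=\prod_{i,j}(x_i+y_j)$. $\mathcal B_{\vec\ell}(z)=\det(e^{z_i\ell_j})/\Delta(z)$. For $\vec u\in\mathbb C^{N+k}$, $\vec v\in\mathbb C^k$, $$\mathcal B_{\vec\ell,p}(\vec u/\vec v)=(-1)^{Nk}\frac{D(\vec u;-\vec v)}{\Delta(\vec u)\Delta(-\vec v)}\det\Big(\big(\tfrac{e^{p(u_i-v_j)}}{u_i-v_j}\big)_{j\le k}\ \ (e^{u_i\ell_j})_{j\le N}\Big)_{i\le N+k},$$ extended analytically; $(\vec u,\vec\xi)$ denotes concatenation. *)

theory Defs
  imports "HOL-Analysis.Analysis" "Jordan_Normal_Form.Determinant"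
    "Jordan_Normal_Form.Gauss_Jordan_Elimination"
begin

text \<open>Vectors in C^n are encoded as functions nat => complex, only the
  coordinates 0..n-1 being relevant (0-based indexing).
  The space nat => complex carries the product topology.\<close>

definition trunc_vec :: "nat \<Rightarrow> (nat \<Rightarrow> complex) \<Rightarrow> (nat \<Rightarrow> complex)" where
  "trunc_vec n x = (\<lambda>i. if i < n then x i else 0)"

definition concat_vec :: "nat \<Rightarrow> (nat \<Rightarrow> complex) \<Rightarrow> (nat \<Rightarrow> complex) \<Rightarrow> (nat \<Rightarrow> complex)" where
  "concat_vec k u xi = (\<lambda>i. if i < k then u i else xi (i - k))"

definition Vdm :: "nat \<Rightarrow> (nat \<Rightarrow> complex) \<Rightarrow> complex" where
  "Vdm n x = (\<Prod>i<n. \<Prod>j\<in>{i<..<n}. x i - x j)"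

definition Dprod :: "nat \<Rightarrow> nat \<Rightarrow> (nat \<Rightarrow> complex) \<Rightarrow> (nat \<Rightarrow> complex) \<Rightarrow> complex" where
  "Dprod n m x y = (\<Prod>i<n. \<Prod>j<m. x i + y j)"

definition generic_pts :: "nat \<Rightarrow> (nat \<Rightarrow> complex) set" where
  "generic_pts n = {w. (\<forall>i\<ge>n. w i = 0) \<and> (\<forall>i<n. \<forall>j<n. i \<noteq> j \<longrightarrow> w i \<noteq> w j)}"

definition B_raw :: "nat \<Rightarrow> (nat \<Rightarrow> real) \<Rightarrow> (nat \<Rightarrow> complex) \<Rightarrow> complex" where
  "B_raw N l z = det (mat N N (\<lambda>(i,j). exp (z i * complex_of_real (l j)))) / Vdm N z"

text \<open>B_l(z), extended analytically (value at generic points, limit from generic points elsewhere).\<close>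
definition B_fun :: "nat \<Rightarrow> (nat \<Rightarrow> real) \<Rightarrow> (nat \<Rightarrow> complex) \<Rightarrow> complex" where
  "B_fun N l z = (if trunc_vec N z \<in> generic_pts N then B_raw N l (trunc_vec N z)
     else Lim (at (trunc_vec N z) within generic_pts N) (B_raw N l))"

definition Bp_raw :: "nat \<Rightarrow> nat \<Rightarrow> (nat \<Rightarrow> real) \<Rightarrow> complex \<Rightarrow>
    (nat \<Rightarrow> complex) \<Rightarrow> (nat \<Rightarrow> complex) \<Rightarrow> complex" where
  "Bp_raw N k l p u v =
     (-1) ^ (N * k) * Dprod (N + k) k u (\<lambda>j. - v j)
       / (Vdm (N + k) u * Vdm k (\<lambda>j. - v j))
     * det (mat (N + k) (N + k) (\<lambda>(i,j).
          if j < k then exp (p * (u i - v j)) / (u i - v j)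
          else exp (u i * complex_of_real (l (j - k)))))"

definition generic_pair :: "nat \<Rightarrow> nat \<Rightarrow> ((nat \<Rightarrow> complex) \<times> (nat \<Rightarrow> complex)) set" where
  "generic_pair n m = {(a, b). a \<in> generic_pts n \<and> b \<in> generic_pts m \<and>
      (\<forall>i<n. \<forall>j<m. a i \<noteq> b j)}"

definition Bp_fun :: "nat \<Rightarrow> nat \<Rightarrow> (nat \<Rightarrow> real) \<Rightarrow> complex \<Rightarrow>
    (nat \<Rightarrow> complex) \<Rightarrow> (nat \<Rightarrow> complex) \<Rightarrow> complex" where
  "Bp_fun N k l p u v =
     (if (trunc_vec (N + k) u, trunc_vec k v) \<in> generic_pair (N + k) k
      then Bp_raw N k l p (trunc_vec (N + k) u) (trunc_vec k v) else
     Lim (at (trunc_vec (N + k) u, trunc_vec k v) within generic_pair (N + k) k)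
         (\<lambda>(a, b). Bp_raw N k l p a b))"

definition weyl_chamber :: "nat \<Rightarrow> (nat \<Rightarrow> real) set" where
  "weyl_chamber N = {l. \<forall>i j. i \<le> j \<longrightarrow> j < N \<longrightarrow> l j \<le> l i}"

definition A_mat :: "nat \<Rightarrow> (nat \<Rightarrow> real) \<Rightarrow> (nat \<Rightarrow> complex) \<Rightarrow> complex mat" where
  "A_mat N l xi = mat N N (\<lambda>(i,j). exp (xi i * complex_of_real (l j)))"

end

theory Submission
  imports Defs "HOL-Complex_Analysis.Complex_Analysis"
begin

lemma unif_from_cont:
  fixes G :: "'x::t2_space \<Rightarrow> 'w::t2_space \<Rightarrow> 'c::metric_space"
  assumes K: "compact K"
    and cont: "\<And>w. w \<in> K \<Longrightarrow> continuous (at (x0,w)) (\<lambda>z. G (fst z) (snd z))"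
  shows "uniform_limit K G (G x0) (nhds x0)"
proof (unfold uniform_limit_iff, intro allI impI)
  fix e :: real assume e: "e > 0"
  define W where "W = interior {z. dist (G (fst z) (snd z)) (G x0 (snd z)) < e}"
  have sub: "{x0} \<times> K \<subseteq> W"
  proof clarify
    fix w assume w: "w \<in> K"
    have t1: "((\<lambda>z. G (fst z) (snd z)) \<longlongrightarrow> G x0 w) (at (x0,w))"
      using cont[OF w] unfolding continuous_at by simp
    have "continuous (at (x0,w)) ((\<lambda>z. G (fst z) (snd z)) \<circ> (\<lambda>z. (x0, snd z)))"
      by (rule continuous_at_compose) (auto intro!: continuous_intros cont[OF w])
    hence t2: "((\<lambda>z. G x0 (snd z)) \<longlongrightarrow> G x0 w) (at (x0,w))"
      unfolding continuous_at by (simp add: o_def)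
    have "\<forall>\<^sub>F z in nhds (x0,w). dist (G (fst z) (snd z)) (G x0 w) < e/2"
      using tendstoD[OF t1, of "e/2"] e by (simp add: eventually_nhds_conv_at)
    moreover have "\<forall>\<^sub>F z in nhds (x0,w). dist (G x0 (snd z)) (G x0 w) < e/2"
      using tendstoD[OF t2, of "e/2"] e by (simp add: eventually_nhds_conv_at)
    ultimately have "\<forall>\<^sub>F z in nhds (x0,w). dist (G (fst z) (snd z)) (G x0 (snd z)) < e"
    proof eventually_elim
      case (elim z)
      have "dist (G (fst z) (snd z)) (G x0 (snd z)) \<le> dist (G (fst z) (snd z)) (G x0 w) + dist (G x0 (snd z)) (G x0 w)"
        by (rule dist_triangle2)
      then show ?case using elim by linarith
    qed
    then obtain S where S: "open S" "(x0,w) \<in> S" "\<forall>z\<in>S. dist (G (fst z) (snd z)) (G x0 (snd z)) < e"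
      unfolding eventually_nhds by blast
    have "S \<subseteq> {z. dist (G (fst z) (snd z)) (G x0 (snd z)) < e}" using S(3) by blast
    then show "(x0, w) \<in> W" unfolding W_def using interiorI[OF S(1) S(2)] by blast
  qed
  obtain X0 where X0: "x0 \<in> X0" "open X0" "X0 \<times> K \<subseteq> W"
    using Elementary_Topology.tube_lemma[OF K _ sub] W_def by auto
  have "W \<subseteq> {z. dist (G (fst z) (snd z)) (G x0 (snd z)) < e}" unfolding W_def
    by (rule interior_subset)
  hence "\<forall>x\<in>X0. \<forall>y\<in>K. dist (G x y) (G x0 y) < e" using X0(3) by fastforce
  thus "\<forall>\<^sub>F x in nhds x0. \<forall>y\<in>K. dist (G x y) (G x0 y) < e"
    using X0 eventually_nhds by blast
qed

definition Tc :: "nat \<Rightarrow> nat \<Rightarrow> (nat\<Rightarrow>complex) \<Rightarrow> complex" where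
  "Tc m c a = 1 / (\<Prod>b\<in>{..m}-{c}. (a c - a b))"

lemma pf_aux: "(x::complex) \<noteq> y \<Longrightarrow> w\<noteq>x \<Longrightarrow> w\<noteq>y \<Longrightarrow>
   T/(w-x)*(1/(w-y)) = T/(x-y)/(w-x) - T/(x-y)/(w-y)"
proof -
  assume h: "x \<noteq> y" "w\<noteq>x" "w\<noteq>y"
  hence h': "w-x \<noteq> 0" "w-y\<noteq>0" "x-y\<noteq>0" by auto
  have e1: "1/(w-x) - 1/(w-y) = (x-y)/((w-x)*(w-y))"
    using h' by (simp add: diff_frac_eq)
  have "T/(x-y)/(w-x) - T/(x-y)/(w-y) = T/(x-y) * (1/(w-x) - 1/(w-y))"
    by (simp add: right_diff_distrib)
  also have "\<dots> = T/((w-x)*(w-y))" using h' by (simp add: e1)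
  finally show ?thesis by simp
qed

lemma pf:
  assumes "\<forall>i\<le>m. \<forall>j\<le>m. i\<noteq>j \<longrightarrow> a i \<noteq> a j" "\<forall>b\<le>m. w \<noteq> a b"
  shows "1/(\<Prod>b\<le>m. (w - a b)) = (\<Sum>c\<le>m. Tc m c a / (w - a c))"
  using assms
proof (induction m arbitrary: w)
  case 0
  then show ?case by (simp add: Tc_def)
next
  case (Suc m)
  let ?z = "a (Suc m)"
  have dist: "\<forall>i\<le>m. \<forall>j\<le>m. i\<noteq>j \<longrightarrow> a i \<noteq> a j" using Suc.prems(1) by auto
  have wz: "w \<noteq> ?z" using Suc.prems(2) by auto
  have cz: "\<And>c. c \<le> m \<Longrightarrow> a c \<noteq> ?z" using Suc.prems(1) by force
  have wc: "\<And>c. c \<le> m \<Longrightarrow> w \<noteq> a c" using Suc.prems(2) by auto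
  have IHw: "1/(\<Prod>b\<le>m. (w - a b)) = (\<Sum>c\<le>m. Tc m c a / (w - a c))"
    using Suc.IH[OF dist] wc by auto
  have IHz: "1/(\<Prod>b\<le>m. (?z - a b)) = (\<Sum>c\<le>m. Tc m c a / (?z - a c))"
    using Suc.IH[OF dist] cz by force
  have Tsuc: "Tc (Suc m) c a = Tc m c a / (a c - ?z)" if "c \<le> m" for c
  proof -
    have "{..Suc m} - {c} = insert (Suc m) ({..m} - {c})" using that by auto
    thus ?thesis unfolding Tc_def using that by (simp add: field_simps)
  qed
  have Tlast: "Tc (Suc m) (Suc m) a = 1/(\<Prod>b\<le>m. (?z - a b))"
  proof -
    have "{..Suc m} - {Suc m} = {..m}" by auto
    thus ?thesis unfolding Tc_def by simp
  qed
  have "1/(\<Prod>b\<le>Suc m. (w - a b)) = (1/(\<Prod>b\<le>m. (w - a b))) * (1/(w - ?z))"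
    by simp
  also have "\<dots> = (\<Sum>c\<le>m. Tc m c a / (w - a c) * (1/(w - ?z)))"
    by (subst IHw) (simp add: sum_divide_distrib)
  also have "\<dots> = (\<Sum>c\<le>m. Tc (Suc m) c a / (w - a c) - (Tc m c a / (a c - ?z)) / (w - ?z))"
  proof (rule sum.cong[OF refl])
    fix c assume c: "c \<in> {..m}"
    show "Tc m c a / (w - a c) * (1 / (w - ?z)) = Tc (Suc m) c a / (w - a c) - Tc m c a / (a c - ?z) / (w - ?z)"
      unfolding Tsuc[OF c[simplified]] by (rule pf_aux) (use cz wc wz c in auto)
  qed
  also have "\<dots> = (\<Sum>c\<le>m. Tc (Suc m) c a / (w - a c)) - (\<Sum>c\<le>m. Tc m c a / (a c - ?z)) / (w - ?z)"
    by (simp add: sum_subtractf sum_divide_distrib)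
  also have "(\<Sum>c\<le>m. Tc m c a / (a c - ?z)) = - (\<Sum>c\<le>m. Tc m c a / (?z - a c))"
    by (simp add: sum_negf[symmetric] minus_divide_right)
  also have "\<dots> = - Tc (Suc m) (Suc m) a" using IHz Tlast by simp
  finally show ?case by simp
qed


lemma dd_int:
  fixes f :: "complex \<Rightarrow> complex"
  assumes hol: "f holomorphic_on UNIV" and dist: "\<forall>i\<le>m. \<forall>j\<le>m. i\<noteq>j \<longrightarrow> a i \<noteq> a j"
    and R: "\<forall>b\<le>m. norm (a b) < R"
  shows "((\<lambda>w. f w / (\<Prod>b\<le>m. (w - a b))) has_contour_integral
           (2 * of_real pi * \<i> * (\<Sum>c\<le>m. Tc m c a * f (a c)))) (circlepath 0 R)"
proof -
  have Rpos: "R > 0" using R by (metis atMost_iff le0 norm_ge_zero order_le_less_trans)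
  have each: "((\<lambda>w. Tc m c a * (f w / (w - a c))) has_contour_integral
           (Tc m c a * (2 * of_real pi * \<i> * f (a c)))) (circlepath 0 R)" if "c \<in> {..m}" for c
    apply (rule has_contour_integral_lmul)
    apply (rule Cauchy_integral_circlepath_simple)
    using hol that R by (auto intro: holomorphic_on_subset)
  have "((\<lambda>w. \<Sum>c\<le>m. Tc m c a * (f w / (w - a c))) has_contour_integral
           (\<Sum>c\<le>m. Tc m c a * (2 * of_real pi * \<i> * f (a c)))) (circlepath 0 R)"
    by (rule has_contour_integral_sum) (use each in auto)
  hence "((\<lambda>w. \<Sum>c\<le>m. Tc m c a * (f w / (w - a c))) has_contour_integral
           (2 * of_real pi * \<i> * (\<Sum>c\<le>m. Tc m c a * f (a c)))) (circlepath 0 R)"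
    by (simp add: sum_distrib_left algebra_simps)
  thus ?thesis
  proof (rule has_contour_integral_eq)
    fix w assume "w \<in> path_image (circlepath 0 R)"
    hence w: "norm w = R" using Rpos by auto
    have wa: "\<forall>b\<le>m. w \<noteq> a b" using R w by auto
    have "(\<Sum>c\<le>m. Tc m c a * (f w / (w - a c))) = f w * (\<Sum>c\<le>m. Tc m c a / (w - a c))"
      by (simp add: sum_distrib_left mult.commute)
    also have "\<dots> = f w * (1/(\<Prod>b\<le>m. (w - a b)))" using pf[OF dist wa] by simp
    finally show "(\<Sum>c\<le>m. Tc m c a * (f w / (w - a c))) = f w / (\<Prod>b\<le>m. (w - a b))" by simp
  qed
qed


lemma ci_cont:
  fixes H :: "'x::t2_space \<Rightarrow> complex \<Rightarrow> complex"
  assumes R: "R > 0"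
    and cont: "\<And>w. w \<in> sphere 0 R \<Longrightarrow> continuous (at (x0,w)) (\<lambda>z. H (fst z) (snd z))"
    and ev: "\<forall>\<^sub>F x in nhds x0. continuous_on (sphere 0 R) (H x)"
  shows "((\<lambda>x. contour_integral (circlepath 0 R) (H x)) \<longlongrightarrow> contour_integral (circlepath 0 R) (H x0)) (nhds x0)"
proof -
  have ul: "uniform_limit (sphere 0 R) H (H x0) (nhds x0)"
    by (rule unif_from_cont) (use cont in auto)
  have ev': "\<forall>\<^sub>F x in nhds x0. H x contour_integrable_on circlepath 0 R"
    using ev by eventually_elim (rule contour_integrable_continuous_circlepath, use R in auto)
  show ?thesis
    by (rule contour_integral_uniform_limit_circlepath(2)[OF ev' ul _ R]) simp
qed

lemma coord_cont_at: "continuous (at x within S) (\<lambda>a::nat\<Rightarrow>complex. a i)"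
  using continuous_on_product_coordinates[of i] continuous_on_eq_continuous_within
  by (metis UNIV_I continuous_at_imp_continuous_within continuous_on_eq_continuous_at open_UNIV)

definition DDe :: "real \<Rightarrow> (complex \<Rightarrow> 'q \<Rightarrow> complex) \<Rightarrow> nat \<Rightarrow> (nat\<Rightarrow>complex) \<Rightarrow> 'q \<Rightarrow> complex" where
  "DDe R g m a q = contour_integral (circlepath 0 R) (\<lambda>w. g w q / (\<Prod>b\<le>m. (w - a b))) / (2 * of_real pi * \<i>)"

lemma ev_norm_lt:
  fixes a0 :: "nat \<Rightarrow> complex" and q0 :: "'a::t2_space"
  assumes "\<forall>b\<le>m. norm (a0 b) < R"
  shows "\<forall>\<^sub>F x in nhds (a0,q0). \<forall>b\<le>m. norm (fst x b) < (R::real)"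
proof -
  have "\<forall>\<^sub>F x in nhds (a0,q0). norm (fst x b) < R" if "b \<le> m" for b
  proof -
    have "continuous (at (a0,q0)) (\<lambda>x::(nat\<Rightarrow>complex)\<times>'a. norm (fst x b))"
      by (intro continuous_intros continuous_at_compose[of _ fst "\<lambda>a. a b", unfolded o_def]
          coord_cont_at)
    hence "((\<lambda>x::(nat\<Rightarrow>complex)\<times>'a. norm (fst x b)) \<longlongrightarrow> norm (a0 b)) (at (a0,q0))"
      by (simp add: continuous_at)
    hence "\<forall>\<^sub>F x in at (a0,q0). norm (fst x b) < R" using assms that by (simp add: order_tendstoD(2))
    thus ?thesis using assms that by (simp add: eventually_nhds_conv_at)
  qed
  hence "\<forall>\<^sub>F x in nhds (a0,q0). \<forall>b\<in>{..m}. norm (fst x b) < R"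
    by (intro eventually_ball_finite) auto
  thus ?thesis by (rule eventually_mono) auto
qed

lemma DDe_cont:
  fixes g :: "complex \<Rightarrow> 'q::t2_space \<Rightarrow> complex"
  assumes gc: "continuous_on UNIV (\<lambda>(w,q). g w q)"
    and R: "\<forall>b\<le>m. norm (a0 b) < R"
  shows "((\<lambda>x. DDe R g m (fst x) (snd x)) \<longlongrightarrow> DDe R g m a0 q0) (nhds (a0,q0))"
proof -
  have Rpos: "R > 0" using R by (metis atMost_iff le0 norm_ge_zero order_le_less_trans)
  have gca: "continuous (at z) (\<lambda>z. g (fst z) (snd z))" for z
  proof -
    have "isCont (\<lambda>(w,q). g w q) z" using gc continuous_on_eq_continuous_at open_UNIV by blast
    thus ?thesis by (simp add: case_prod_unfold)
  qed
  let ?H = "\<lambda>(x::(nat\<Rightarrow>complex)\<times>'q) w. g w (snd x) / (\<Prod>b\<le>m. (w - fst x b))"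
  have "((\<lambda>x. contour_integral (circlepath 0 R) (?H x)) \<longlongrightarrow> contour_integral (circlepath 0 R) (?H (a0,q0))) (nhds (a0,q0))"
  proof (rule ci_cont[OF Rpos])
    fix w :: complex assume w: "w \<in> sphere 0 R"
    have nz: "(\<Prod>b\<le>m. (w - a0 b)) \<noteq> 0" using w R by auto
    have c1: "continuous (at ((a0,q0),w)) (\<lambda>z. g (snd z) (snd (fst z)))"
      using continuous_at_compose[of "((a0,q0),w)" "\<lambda>z. (snd z, snd (fst z))" "\<lambda>z. g (fst z) (snd z)"]
        gca by (auto simp: o_def intro!: continuous_intros)
    have c2: "continuous (at ((a0,q0),w)) (\<lambda>z::((nat\<Rightarrow>complex)\<times>'q)\<times>complex. fst (fst z) b)" for b
      using continuous_at_compose[of "((a0,q0),w)" "\<lambda>z::((nat\<Rightarrow>complex)\<times>'q)\<times>complex. fst (fst z)" "\<lambda>a. a b"]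
        coord_cont_at by (auto simp: o_def intro!: continuous_intros)
    show "continuous (at ((a0,q0),w)) (\<lambda>z. ?H (fst z) (snd z))"
      using nz by (auto intro!: continuous_intros c1 c2)
  next
    show "\<forall>\<^sub>F x in nhds (a0,q0). continuous_on (sphere 0 R) (?H x)"
      using ev_norm_lt[OF R, of q0]
    proof eventually_elim
      case (elim x)
      have "continuous_on UNIV (\<lambda>w. (w, snd x))" by (intro continuous_intros)
      hence "continuous_on UNIV (\<lambda>w. (\<lambda>(w,q). g w q) (w, snd x))"
        by (rule continuous_on_compose2[OF gc]) simp
      hence gq: "continuous_on UNIV (\<lambda>w. g w (snd x))" by simp
      show ?case
        by (intro continuous_intros continuous_on_subset[OF gq]) (use elim in auto)
    qed
  qed
  thus ?thesis unfolding DDe_def by (auto intro!: tendsto_divide simp: case_prod_unfold)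
qed



lemma schur_det:
  fixes P :: "complex mat"
  assumes P: "P \<in> carrier_mat k k" and Q: "Q \<in> carrier_mat k n" and R: "R \<in> carrier_mat n k"
    and A: "A \<in> carrier_mat n n" and Bi: "Bi \<in> carrier_mat n n" and AB: "A * Bi = 1\<^sub>m n"
  shows "Determinant.det (four_block_mat P Q R A) = Determinant.det A * Determinant.det (P - Q * (Bi * R))"
proof -
  let ?E = "four_block_mat (1\<^sub>m k) (0\<^sub>m k n) (- (Bi * R)) (1\<^sub>m n)"
  have BR: "Bi * R \<in> carrier_mat n k" using Bi R by auto
  have mBR: "- (Bi * R) \<in> carrier_mat n k" using BR by auto
  have E: "?E \<in> carrier_mat (k+n) (k+n)" using mBR by auto
  have M: "four_block_mat P Q R A \<in> carrier_mat (k+n) (k+n)" using P Q R A by auto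
  have prod: "four_block_mat P Q R A * ?E = four_block_mat (P * 1\<^sub>m k + Q * - (Bi * R)) (P * 0\<^sub>m k n + Q * 1\<^sub>m n)
       (R * 1\<^sub>m k + A * - (Bi * R)) (R * 0\<^sub>m k n + A * 1\<^sub>m n)"
    by (rule mult_four_block_mat[OF P Q R A]) (use mBR in auto)
  have e1: "P * 1\<^sub>m k + Q * - (Bi * R) = P - Q * (Bi * R)"
  proof -
    have "Q * - (Bi * R) = - (Q * (Bi * R))" by (rule uminus_mult_right_mat) (use Q BR in auto)
    thus ?thesis using P Q BR by (simp add: add_uminus_minus_mat[of _ k k])
  qed
  have e2: "P * 0\<^sub>m k n + Q * 1\<^sub>m n = Q" using P Q by simp
  have e3: "R * 1\<^sub>m k + A * - (Bi * R) = 0\<^sub>m n k"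
  proof -
    have "A * - (Bi * R) = - (A * (Bi * R))" by (rule uminus_mult_right_mat) (use A BR in auto)
    also have "A * (Bi * R) = (A * Bi) * R" using A Bi R by (simp add: assoc_mult_mat)
    also have "\<dots> = R" using AB R by simp
    finally have "A * - (Bi * R) = - R" .
    moreover have "R + - R = 0\<^sub>m n k" using R by (intro eq_matI) auto
    ultimately show ?thesis using R by simp
  qed
  have e4: "R * 0\<^sub>m k n + A * 1\<^sub>m n = A" using R A by simp
  have dE: "Determinant.det ?E = 1"
    by (subst det_four_block_mat_upper_right_zero[of _ k _ n]) (use mBR in auto)
  have "Determinant.det (four_block_mat P Q R A) = Determinant.det (four_block_mat P Q R A * ?E)"
    using det_mult[OF M E] dE by simp
  also have "\<dots> = Determinant.det (four_block_mat (P - Q * (Bi * R)) Q (0\<^sub>m n k) A)"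
    unfolding prod e1 e2 e3 e4 ..
  also have "\<dots> = Determinant.det (P - Q * (Bi * R)) * Determinant.det A"
    by (rule det_four_block_mat_lower_left_zero) (use P Q BR A in \<open>auto intro!: minus_carrier_mat\<close>)
  finally show ?thesis by simp
qed


definition sfun :: "nat \<Rightarrow> (nat \<Rightarrow> real) \<Rightarrow> complex \<Rightarrow> (nat \<Rightarrow> complex) \<Rightarrow> complex mat \<Rightarrow> complex \<Rightarrow> complex \<Rightarrow> complex" where
  "sfun N l p z Bi x y = exp (p * (x - y)) / (x - y)
     - Matrix.vec N (\<lambda>j. exp (x * complex_of_real (l j))) \<bullet> (Bi *\<^sub>v Matrix.vec N (\<lambda>m. exp (p * (z m - y)) / (z m - y)))"

lemma big_det:
  assumes Bi: "Bi \<in> carrier_mat N N" and AB: "A_mat N l z * Bi = 1\<^sub>m N"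
  shows "Determinant.det (Matrix.mat (N + k) (N + k) (\<lambda>(i,j).
          if j < k then exp (p * (concat_vec k u z i - v j)) / (concat_vec k u z i - v j)
          else exp (concat_vec k u z i * complex_of_real (l (j - k)))))
    = Determinant.det (A_mat N l z) * Determinant.det (Matrix.mat k k (\<lambda>(i,j). sfun N l p z Bi (u i) (v j)))"
proof -
  define P where "P = Matrix.mat k k (\<lambda>(i,j). exp (p * (u i - v j)) / (u i - v j))"
  define Q where "Q = Matrix.mat k N (\<lambda>(i,j). exp (u i * complex_of_real (l j)))"
  define R where "R = Matrix.mat N k (\<lambda>(m,j). exp (p * (z m - v j)) / (z m - v j))"
  define A where "A = A_mat N l z"
  have PC: "P \<in> carrier_mat k k" and QC: "Q \<in> carrier_mat k N" and RC: "R \<in> carrier_mat N k"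
    and AC: "A \<in> carrier_mat N N" unfolding P_def Q_def R_def A_def A_mat_def by auto
  have eq: "Matrix.mat (N + k) (N + k) (\<lambda>(i,j).
          if j < k then exp (p * (concat_vec k u z i - v j)) / (concat_vec k u z i - v j)
          else exp (concat_vec k u z i * complex_of_real (l (j - k)))) = four_block_mat P Q R A"
    by (rule eq_matI) (auto simp: P_def Q_def R_def A_def A_mat_def concat_vec_def)
  have entries: "P - Q * (Bi * R) = Matrix.mat k k (\<lambda>(i,j). sfun N l p z Bi (u i) (v j))"
  proof (rule eq_matI)
    fix i j assume ij: "i < dim_row (Matrix.mat k k (\<lambda>(i,j). sfun N l p z Bi (u i) (v j)))"
       "j < dim_col (Matrix.mat k k (\<lambda>(i,j). sfun N l p z Bi (u i) (v j)))"
    hence i: "i < k" and j: "j < k" by auto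
    have BR: "Bi * R \<in> carrier_mat N k" using Bi RC by auto
    have "(Q * (Bi * R)) $$ (i,j) = Matrix.row Q i \<bullet> col (Bi * R) j"
      by (rule index_mult_mat(1)) (use i j QC BR in auto)
    also have "col (Bi * R) j = Bi *\<^sub>v col R j" using col_mult2[OF Bi RC j] .
    also have "Matrix.row Q i = Matrix.vec N (\<lambda>j. exp (u i * complex_of_real (l j)))"
      using i unfolding Q_def by (intro eq_vecI) auto
    also have "col R j = Matrix.vec N (\<lambda>m. exp (p * (z m - v j)) / (z m - v j))"
      using j unfolding R_def by (intro eq_vecI) auto
    finally have qq: "(Q * (Bi * R)) $$ (i,j) = Matrix.vec N (\<lambda>j. exp (u i * complex_of_real (l j))) \<bullet> (Bi *\<^sub>v Matrix.vec N (\<lambda>m. exp (p * (z m - v j)) / (z m - v j)))" .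
    have "(P - Q * (Bi * R)) $$ (i,j) = P $$ (i,j) - (Q * (Bi * R)) $$ (i,j)"
      by (rule index_minus_mat) (use i j QC BR in auto)
    thus "(P - Q * (Bi * R)) $$ (i,j) = Matrix.mat k k (\<lambda>(i,j). sfun N l p z Bi (u i) (v j)) $$ (i,j)"
      using i j qq by (simp add: P_def sfun_def)
  qed (use PC QC Bi RC in auto)
  have AB': "A * Bi = 1\<^sub>m N" using AB A_def by simp
  show ?thesis unfolding eq
    using schur_det[OF PC QC RC AC Bi AB'] entries A_def by simp
qed


lemma inv_exists:
  fixes A :: "complex mat"
  assumes A: "A \<in> carrier_mat n n" and d: "Determinant.det A \<noteq> 0"
  shows "\<exists>Bi. mat_inverse A = Some Bi \<and> A * Bi = 1\<^sub>m n \<and> Bi \<in> carrier_mat n n"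
proof -
  have U: "A \<in> Units (ring_mat TYPE(complex) n ())" by (rule det_non_zero_imp_unit[OF A d])
  have "mat_inverse A \<noteq> None"
  proof
    assume "mat_inverse A = None"
    then have "A \<notin> Units (ring_mat TYPE(complex) n ())" by (rule mat_inverse(1)[OF A])
    with U show False by simp
  qed
  then obtain Bi where Bi: "mat_inverse A = Some Bi" by auto
  thus ?thesis using mat_inverse(2)[OF A Bi] by blast
qed

lemma prod_split: "(\<Prod>i<k+(N::nat). f i) = (\<Prod>i<k. f i) * (\<Prod>m<N. f (k+m))"
  by (induction N) (auto simp: algebra_simps)

lemma prod_split_gt: "i < k \<Longrightarrow> (\<Prod>j\<in>{i<..<k+(N::nat)}. f j) = (\<Prod>j\<in>{i<..<k}. f j) * (\<Prod>m<N. f (k+m))"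
proof (induction N)
  case 0 then show ?case by simp
next
  case (Suc N)
  have "{i<..<k + Suc N} = insert (k+N) {i<..<k+N}" using Suc.prems by auto
  then show ?case using Suc by (simp add: algebra_simps)
qed

lemma prod_shift_gt: "(\<Prod>j\<in>{k+m<..<k+(N::nat)}. f j) = (\<Prod>j\<in>{m<..<N}. f (k+j))"
proof -
  have "{k+m<..<k+N} = (+) k ` {m<..<N}"
  proof (intro equalityI subsetI)
    fix x assume h: "x \<in> {k+m<..<k+N}"
    hence "x = k + (x-k)" "x - k \<in> {m<..<N}" by auto
    thus "x \<in> (+) k ` {m<..<N}" by (metis image_eqI)
  qed auto
  thus ?thesis by (simp add: prod.reindex)
qed

lemma Dprod_concat:
  "Dprod (N+k) k (concat_vec k u z) (\<lambda>j. - v j) = Dprod k k u (\<lambda>j. - v j) * (\<Prod>m<N. \<Prod>j<k. (z m - v j))"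
  unfolding Dprod_def by (subst add.commute) (simp add: prod_split concat_vec_def)

lemma Vdm_concat:
  "Vdm (N+k) (concat_vec k u z) = Vdm k u * (\<Prod>i<k. \<Prod>m<N. (u i - z m)) * Vdm N z"
proof -
  have "Vdm (N+k) (concat_vec k u z) = (\<Prod>i<k+N. \<Prod>j\<in>{i<..<k+N}. concat_vec k u z i - concat_vec k u z j)"
    unfolding Vdm_def by (simp add: add.commute)
  also have "\<dots> = (\<Prod>i<k. \<Prod>j\<in>{i<..<k+N}. concat_vec k u z i - concat_vec k u z j)
      * (\<Prod>m<N. \<Prod>j\<in>{k+m<..<k+N}. concat_vec k u z (k+m) - concat_vec k u z j)"
    by (rule prod_split)
  also have "(\<Prod>i<k. \<Prod>j\<in>{i<..<k+N}. concat_vec k u z i - concat_vec k u z j)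
      = (\<Prod>i<k. (\<Prod>j\<in>{i<..<k}. u i - u j) * (\<Prod>m<N. u i - z m))"
  proof (rule prod.cong[OF refl])
    fix i assume "i \<in> {..<k}"
    hence i: "i < k" by auto
    show "(\<Prod>j\<in>{i<..<k+N}. concat_vec k u z i - concat_vec k u z j) = (\<Prod>j\<in>{i<..<k}. u i - u j) * (\<Prod>m<N. u i - z m)"
      using i by (simp add: prod_split_gt concat_vec_def)
  qed
  also have "(\<Prod>m<N. \<Prod>j\<in>{k+m<..<k+N}. concat_vec k u z (k+m) - concat_vec k u z j)
      = (\<Prod>m<N. \<Prod>j\<in>{m<..<N}. z m - z j)"
    by (simp add: prod_shift_gt concat_vec_def)
  finally show ?thesis unfolding Vdm_def by (simp add: prod.distrib algebra_simps)
qed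

lemma det_scale:
  "Determinant.det (Matrix.mat k k (\<lambda>(i,j). r i * s j * f i j)) = (\<Prod>i<k. r i) * (\<Prod>j<k. s j) * Determinant.det (Matrix.mat k k (\<lambda>(i,j). f i j :: complex))"
proof -
  have e: "Determinant.det (Matrix.mat k k (\<lambda>(i,j). h i j)) = (\<Sum>p\<in>{p. p permutes {0..<k}}. signof p * (\<Prod>i=0..<k. h i (p i)))" for h
  proof -
    have "Determinant.det (Matrix.mat k k (\<lambda>(i,j). h i j)) = (\<Sum>p\<in>{p. p permutes {0..<k}}. signof p * (\<Prod>i=0..<k. Matrix.mat k k (\<lambda>(i,j). h i j) $$ (i, p i)))"
      by (rule det_def') simp
    also have "\<dots> = (\<Sum>p\<in>{p. p permutes {0..<k}}. signof p * (\<Prod>i=0..<k. h i (p i)))"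
    proof (rule sum.cong[OF refl])
      fix p assume "p \<in> {p. p permutes {0..<k}}"
      hence "\<And>i. i < k \<Longrightarrow> p i < k" by (auto dest: permutes_in_image)
      thus "signof p * (\<Prod>i=0..<k. Matrix.mat k k (\<lambda>(i,j). h i j) $$ (i, p i)) = signof p * (\<Prod>i=0..<k. h i (p i))"
        by (auto intro!: prod.cong)
    qed
    finally show ?thesis .
  qed
  have "(\<Prod>i=0..<k. r i * s (p i) * f i (p i)) = (\<Prod>i<k. r i) * (\<Prod>j<k. s j) * (\<Prod>i=0..<k. f i (p i))"
    if p: "p permutes {0..<k}" for p
  proof -
    have "(\<Prod>i=0..<k. s (p i)) = (\<Prod>j=0..<k. s j)"
      using prod.permute[OF p, of s] by (simp add: o_def)
    thus ?thesis by (simp add: prod.distrib atLeast0LessThan)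
  qed
  thus ?thesis unfolding e by (simp add: sum_distrib_left algebra_simps)
qed

lemma det_1: "Determinant.det (Matrix.mat 1 1 f) = f (0,0)"
proof -
  have "Determinant.det (Matrix.mat 1 1 f) = prod_list (diag_mat (Matrix.mat 1 1 f))"
    by (rule det_lower_triangular[of 1]) auto
  thus ?thesis by (simp add: diag_mat_def)
qed


lemma Vdm_nz: "\<forall>i<n. \<forall>j<n. i\<noteq>j \<longrightarrow> a i \<noteq> a j \<Longrightarrow> Vdm n a \<noteq> 0"
  unfolding Vdm_def by (auto simp: prod_zero_iff)

lemma Vdm1: "Vdm (Suc 0) a = 1" by (simp add: Vdm_def)

lemma det_1': "Determinant.det (Matrix.mat (Suc 0) (Suc 0) f) = f (0,0)"
  using det_1 by simp

lemma gen_id: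
  assumes zd: "\<forall>i<N. \<forall>j<N. i\<noteq>j \<longrightarrow> z i \<noteq> z j" and dA: "Determinant.det (A_mat N l z) \<noteq> 0"
    and uz: "\<forall>i<k. \<forall>m<N. u i \<noteq> z m" and vz: "\<forall>j<k. \<forall>m<N. v j \<noteq> z m"
    and uv: "\<forall>i<k. \<forall>j<k. u i \<noteq> v j"
    and ud: "\<forall>i<k. \<forall>j<k. i\<noteq>j \<longrightarrow> u i \<noteq> u j" and vd: "\<forall>i<k. \<forall>j<k. i\<noteq>j \<longrightarrow> v i \<noteq> v j"
  shows "Bp_raw N k l p (concat_vec k u z) v / B_raw N l z =
     Dprod k k u (\<lambda>j. - v j) / (Vdm k u * Vdm k (\<lambda>j. - v j))
     * Determinant.det (Matrix.mat k k (\<lambda>(i,j). 1 / (u i - v j)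
         * (Bp_raw N 1 l p (concat_vec 1 (\<lambda>_. u i) z) (\<lambda>_. v j) / B_raw N l z)))"
proof -
  have AC: "A_mat N l z \<in> carrier_mat N N" unfolding A_mat_def by simp
  obtain Bi where Bi: "A_mat N l z * Bi = 1\<^sub>m N" "Bi \<in> carrier_mat N N"
    using inv_exists[OF AC dA] by blast
  define dA' where "dA' = Determinant.det (A_mat N l z)"
  define VN where "VN = Vdm N z"
  define X where "X j = (\<Prod>m<N. (z m - v j))" for j
  define Y where "Y i = (\<Prod>m<N. (u i - z m))" for i
  define sf where "sf i j = sfun N l p z Bi (u i) (v j)" for i j
  have VN: "VN \<noteq> 0" unfolding VN_def by (rule Vdm_nz[OF zd])
  have dA'nz: "dA' \<noteq> 0" using dA dA'_def by simp
  have B: "B_raw N l z = dA' / VN" unfolding B_raw_def dA'_def VN_def A_mat_def by simp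
  have Ynz: "Y i \<noteq> 0" if "i < k" for i using uz that unfolding Y_def by (auto simp: prod_zero_iff)
  have Vk: "Vdm k u \<noteq> 0" by (rule Vdm_nz[OF ud])
  have Vk': "Vdm k (\<lambda>j. - v j) \<noteq> 0" by (rule Vdm_nz) (use vd in auto)
  have LHS: "Bp_raw N k l p (concat_vec k u z) v = (-1)^(N*k) * (Dprod k k u (\<lambda>j. - v j) * (\<Prod>m<N. \<Prod>j<k. (z m - v j)))
      / (Vdm k u * (\<Prod>i<k. Y i) * VN * Vdm k (\<lambda>j. - v j)) * (dA' * Determinant.det (Matrix.mat k k (\<lambda>(i,j). sf i j)))"
    unfolding Bp_raw_def Dprod_concat Vdm_concat big_det[OF Bi(2) Bi(1)]
    by (simp add: Y_def VN_def dA'_def sf_def)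
  have entry: "1 / (u i - v j) * (Bp_raw N 1 l p (concat_vec 1 (\<lambda>_. u i) z) (\<lambda>_. v j) / B_raw N l z)
      = (1 / Y i) * ((-1)^N * X j) * sf i j" if "i < k" "j < k" for i j
  proof -
    have eqE: "Bp_raw N 1 l p (concat_vec 1 (\<lambda>_. u i) z) (\<lambda>_. v j) =
      (-1)^N * ((u i - v j) * X j) / (Y i * VN) * (dA' * sf i j)"
      unfolding Bp_raw_def Dprod_concat Vdm_concat big_det[OF Bi(2) Bi(1)]
      by (simp add: Y_def X_def VN_def dA'_def sf_def Dprod_def Vdm1 det_1')
    have "u i - v j \<noteq> 0" using uv that by auto
    thus ?thesis unfolding eqE B using VN dA'nz Ynz[OF that(1)] by (simp add: field_simps)
  qed
  have "Determinant.det (Matrix.mat k k (\<lambda>(i,j). 1 / (u i - v j)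
         * (Bp_raw N 1 l p (concat_vec 1 (\<lambda>_. u i) z) (\<lambda>_. v j) / B_raw N l z)))
     = Determinant.det (Matrix.mat k k (\<lambda>(i,j). (1 / Y i) * ((-1)^N * X j) * sf i j))"
    by (rule arg_cong[where f=Determinant.det], rule cong_mat) (auto simp only: entry case_prod_conv)
  also have "\<dots> = (\<Prod>i<k. 1 / Y i) * (\<Prod>j<k. (-1)^N * X j) * Determinant.det (Matrix.mat k k (\<lambda>(i,j). sf i j))"
    by (rule det_scale)
  also have "(\<Prod>j<k. (-1)^N * X j) = (-1)^(N*k) * (\<Prod>m<N. \<Prod>j<k. (z m - v j))"
    by (simp add: prod.distrib X_def power_mult prod.swap[of _ "{..<N}"])
  also have "(\<Prod>i<k. 1 / Y i) = 1 / (\<Prod>i<k. Y i)" by (simp add: prod_dividef)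
  finally have R: "Determinant.det (Matrix.mat k k (\<lambda>(i,j). 1 / (u i - v j)
         * (Bp_raw N 1 l p (concat_vec 1 (\<lambda>_. u i) z) (\<lambda>_. v j) / B_raw N l z)))
     = 1 / (\<Prod>i<k. Y i) * ((-1)^(N*k) * (\<Prod>m<N. \<Prod>j<k. (z m - v j))) * Determinant.det (Matrix.mat k k (\<lambda>(i,j). sf i j))" .
  have Yall: "(\<Prod>i<k. Y i) \<noteq> 0" using Ynz by (simp add: prod_zero_iff)
  show ?thesis unfolding LHS R unfolding B using VN dA'nz Vk Vk' Yall by (simp add: field_simps)
qed


lemma neg_vec_sp:
  assumes Bi: "Bi \<in> carrier_mat N N"
  shows "Matrix.vec N x \<bullet> (Bi *\<^sub>v Matrix.vec N (\<lambda>i. - f i)) = - (Matrix.vec N x \<bullet> (Bi *\<^sub>v Matrix.vec N f :: complex Matrix.vec))"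
  using Bi by (simp add: scalar_prod_def mult_mat_vec_def sum_negf[symmetric] sum_distrib_left)

lemma part2_raw:
  assumes zd: "\<forall>i<N. \<forall>j<N. i\<noteq>j \<longrightarrow> z i \<noteq> z j" and dA: "Determinant.det (A_mat N l z) \<noteq> 0"
    and uz: "\<forall>m<N. uu \<noteq> z m \<and> vv \<noteq> z m" and uv: "uu \<noteq> vv"
  shows "Bp_raw N 1 l p (concat_vec 1 (\<lambda>_. uu) z) (\<lambda>_. vv) / B_raw N l z =
       (uu - vv) * (\<Prod>i<N. (vv - z i) / (uu - z i))
       * (exp (p * (uu - vv)) / (uu - vv)
          + Matrix.vec N (\<lambda>j. exp (complex_of_real (l j) * uu))
            \<bullet> (the (mat_inverse (A_mat N l z))
               *\<^sub>v Matrix.vec N (\<lambda>i. exp (p * (z i - vv)) / (vv - z i))))"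
proof -
  have AC: "A_mat N l z \<in> carrier_mat N N" unfolding A_mat_def by simp
  obtain Bi where Bi0: "mat_inverse (A_mat N l z) = Some Bi" and Bi: "A_mat N l z * Bi = 1\<^sub>m N" "Bi \<in> carrier_mat N N"
    using inv_exists[OF AC dA] by blast
  define dA' where "dA' = Determinant.det (A_mat N l z)"
  define VN where "VN = Vdm N z"
  define X where "X = (\<Prod>m<N. (z m - vv))"
  define Y where "Y = (\<Prod>m<N. (uu - z m))"
  have VN: "VN \<noteq> 0" unfolding VN_def by (rule Vdm_nz[OF zd])
  have dA'nz: "dA' \<noteq> 0" using dA dA'_def by simp
  have B: "B_raw N l z = dA' / VN" unfolding B_raw_def dA'_def VN_def A_mat_def by simp
  have Ynz: "Y \<noteq> 0" using uz unfolding Y_def by (auto simp: prod_zero_iff)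
  have eqE: "Bp_raw N 1 l p (concat_vec 1 (\<lambda>_. uu) z) (\<lambda>_. vv) =
      (-1)^N * ((uu - vv) * X) / (Y * VN) * (dA' * sfun N l p z Bi uu vv)"
    unfolding Bp_raw_def Dprod_concat Vdm_concat big_det[OF Bi(2) Bi(1)]
    by (simp add: Y_def X_def VN_def dA'_def Dprod_def Vdm1 det_1')
  have sf: "sfun N l p z Bi uu vv = exp (p * (uu - vv)) / (uu - vv)
          + Matrix.vec N (\<lambda>j. exp (complex_of_real (l j) * uu))
            \<bullet> (Bi *\<^sub>v Matrix.vec N (\<lambda>i. exp (p * (z i - vv)) / (vv - z i)))"
  proof -
    have "Matrix.vec N (\<lambda>i. exp (p * (z i - vv)) / (vv - z i)) = Matrix.vec N (\<lambda>i. - (exp (p * (z i - vv)) / (z i - vv)))"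
      by (intro eq_vecI) (auto simp: minus_divide_right)
    moreover have "(\<lambda>j. exp (complex_of_real (l j) * uu)) = (\<lambda>j. exp (uu * complex_of_real (l j)))"
      by (simp add: mult.commute)
    ultimately show ?thesis unfolding sfun_def using neg_vec_sp[OF Bi(2)] by simp
  qed
  have pr: "(\<Prod>i<N. (vv - z i) / (uu - z i)) = (-1)^N * X / Y"
  proof -
    have "(\<Prod>i<N. (vv - z i)) = (\<Prod>i<N. (-1) * (z i - vv))" by (rule prod.cong) auto
    also have "\<dots> = (\<Prod>i<N. (-1)) * (\<Prod>i<N. (z i - vv))" by (rule prod.distrib)
    also have "\<dots> = (-1)^N * X" unfolding X_def by simp
    finally show ?thesis unfolding Y_def by (simp add: prod_dividef)
  qed
  have th: "the (mat_inverse (A_mat N l z)) = Bi" using Bi0 by simp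
  show ?thesis unfolding eqE B pr th sf[symmetric] using VN dA'nz Ynz uv by (simp add: field_simps)
qed



lemma P_Vdm: "(\<Prod>m<n. \<Prod>b<m. (a m - a b)) = (\<Prod>m<n. (-1::complex)^m) * Vdm n a"
proof (induction n)
  case 0 then show ?case by (simp add: Vdm_def)
next
  case (Suc n)
  have V: "Vdm (Suc n) a = Vdm n a * (\<Prod>i<n. (a i - a n))"
  proof -
    have "(\<Prod>j\<in>{i<..<Suc n}. a i - a j) = (\<Prod>j\<in>{i<..<n}. a i - a j) * (a i - a n)" if "i < n" for i
    proof -
      have "{i<..<Suc n} = insert n {i<..<n}" using that by auto
      thus ?thesis by simp
    qed
    moreover have "{n<..<Suc n} = {}" by auto
    ultimately have "Vdm (Suc n) a = (\<Prod>i<n. (\<Prod>j\<in>{i<..<n}. a i - a j) * (a i - a n))"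
      unfolding Vdm_def by (simp add: prod.lessThan_Suc)
    thus ?thesis by (simp add: Vdm_def prod.distrib)
  qed
  have "(\<Prod>b<n. (a n - a b)) = (-1)^n * (\<Prod>i<n. (a i - a n))"
  proof -
    have "(\<Prod>b<n. (a n - a b)) = (\<Prod>b<n. (-1) * (a b - a n))" by (rule prod.cong) auto
    also have "\<dots> = (\<Prod>b<n. (-1)) * (\<Prod>b<n. (a b - a n))" by (rule prod.distrib)
    finally show ?thesis by simp
  qed
  then show ?case using Suc V by (simp add: prod.lessThan_Suc algebra_simps)
qed

lemma det_tendsto:
  fixes f :: "'x \<Rightarrow> nat \<Rightarrow> nat \<Rightarrow> complex"
  assumes "\<And>i j. i < n \<Longrightarrow> j < n \<Longrightarrow> ((\<lambda>x. f x i j) \<longlongrightarrow> g i j) F"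
  shows "((\<lambda>x. Determinant.det (Matrix.mat n n (\<lambda>(i,j). f x i j))) \<longlongrightarrow> Determinant.det (Matrix.mat n n (\<lambda>(i,j). g i j))) F"
proof -
  have e: "Determinant.det (Matrix.mat n n (\<lambda>(i,j). h i j)) = (\<Sum>p\<in>{p. p permutes {0..<n}}. signof p * (\<Prod>i=0..<n. h i (p i)))" for h
  proof -
    have "Determinant.det (Matrix.mat n n (\<lambda>(i,j). h i j)) = (\<Sum>p\<in>{p. p permutes {0..<n}}. signof p * (\<Prod>i=0..<n. Matrix.mat n n (\<lambda>(i,j). h i j) $$ (i, p i)))"
      by (rule det_def') simp
    also have "\<dots> = (\<Sum>p\<in>{p. p permutes {0..<n}}. signof p * (\<Prod>i=0..<n. h i (p i)))"
    proof (rule sum.cong[OF refl])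
      fix p assume "p \<in> {p. p permutes {0..<n}}"
      hence "\<And>i. i < n \<Longrightarrow> p i < n" by (auto dest: permutes_in_image)
      thus "signof p * (\<Prod>i=0..<n. Matrix.mat n n (\<lambda>(i,j). h i j) $$ (i, p i)) = signof p * (\<Prod>i=0..<n. h i (p i))"
        by (auto intro!: prod.cong)
    qed
    finally show ?thesis .
  qed
  show ?thesis unfolding e
  proof (intro tendsto_intros)
    fix p i assume p: "p \<in> {p. p permutes {0..<n}}" and i: "i \<in> {0..<n}"
    hence "p i < n" by (auto dest: permutes_in_image)
    thus "((\<lambda>x. f x i (p i)) \<longlongrightarrow> g i (p i)) F" using assms i by auto
  qed
qed


lemma DD_identity:
  fixes F :: "nat \<Rightarrow> complex \<Rightarrow> 'q \<Rightarrow> complex"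
  assumes hol: "\<And>j q. (\<lambda>w. F j w q) holomorphic_on UNIV"
    and dist: "\<forall>i<n. \<forall>j<n. i\<noteq>j \<longrightarrow> a i \<noteq> a j"
    and R: "\<forall>b<n. norm (a b) < R"
  shows "Determinant.det (Matrix.mat n n (\<lambda>(i,j). F j (a i) q)) / Vdm n a
     = (\<Prod>m<n. (-1::complex)^m) * Determinant.det (Matrix.mat n n (\<lambda>(m,j). DDe R (F j) m a q))"
proof -
  let ?Fm = "Matrix.mat n n (\<lambda>(i,j). F j (a i) q)"
  let ?Tm = "Matrix.mat n n (\<lambda>(m,c). if c \<le> m then Tc m c a else 0)"
  let ?Dm = "Matrix.mat n n (\<lambda>(m,j). DDe R (F j) m a q)"
  have DDe_eq: "DDe R (F j) m a q = (\<Sum>c\<le>m. Tc m c a * F j (a c) q)" if "m < n" for j m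
  proof -
    have d: "\<forall>i\<le>m. \<forall>j\<le>m. i\<noteq>j \<longrightarrow> a i \<noteq> a j" using dist that by auto
    have r: "\<forall>b\<le>m. norm (a b) < R" using R that by auto
    show ?thesis unfolding DDe_def
      using contour_integral_unique[OF dd_int[OF hol d r]] by simp
  qed
  have prodm: "?Dm = ?Tm * ?Fm"
  proof (rule eq_matI)
    fix m j assume m: "m < dim_row (?Tm * ?Fm)" and j: "j < dim_col (?Tm * ?Fm)"
    hence mn: "m < n" and jn: "j < n" by auto
    have "(?Tm * ?Fm) $$ (m,j) = (\<Sum>c<n. (if c \<le> m then Tc m c a else 0) * F j (a c) q)"
      using mn jn by (simp add: scalar_prod_def atLeast0LessThan)
    also have "\<dots> = (\<Sum>c\<in>{..m}. Tc m c a * F j (a c) q)"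
    proof -
      have "{..m} \<subseteq> {..<n}" using mn by auto
      thus ?thesis by (intro sum.mono_neutral_cong_right) auto
    qed
    finally show "?Dm $$ (m,j) = (?Tm * ?Fm) $$ (m,j)" using mn jn DDe_eq by simp
  qed auto
  have detT: "Determinant.det ?Tm = (\<Prod>m<n. 1 / (\<Prod>b<m. (a m - a b)))"
  proof -
    have "Determinant.det ?Tm = prod_list (diag_mat ?Tm)"
      by (rule det_lower_triangular[of n]) auto
    also have "\<dots> = (\<Prod>m\<in>set [0..<n]. ?Tm $$ (m,m))"
      unfolding diag_mat_def by (subst prod.distinct_set_conv_list) auto
    also have "\<dots> = (\<Prod>m<n. 1 / (\<Prod>b<m. (a m - a b)))"
    proof (rule prod.cong)
      fix m assume "m \<in> {..<n}"
      moreover have "{..m} - {m} = {..<m}" by auto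
      ultimately show "?Tm $$ (m,m) = 1 / (\<Prod>b<m. (a m - a b))" by (simp add: Tc_def)
    qed auto
    finally show ?thesis .
  qed
  have dm: "Determinant.det ?Dm = Determinant.det ?Tm * Determinant.det ?Fm"
    unfolding prodm by (rule det_mult) auto
  have Pnz: "(\<Prod>m<n. \<Prod>b<m. (a m - a b)) \<noteq> 0" using dist by (auto simp: prod_zero_iff)
  have "Determinant.det ?Tm = 1 / (\<Prod>m<n. \<Prod>b<m. (a m - a b))"
    unfolding detT by (simp add: prod_dividef)
  hence "Determinant.det ?Fm = (\<Prod>m<n. \<Prod>b<m. (a m - a b)) * Determinant.det ?Dm"
    using dm Pnz by (simp add: field_simps)
  also have "\<dots> = (\<Prod>m<n. (-1::complex)^m) * Vdm n a * Determinant.det ?Dm" by (simp add: P_Vdm)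
  finally show ?thesis using Vdm_nz[OF dist] by simp
qed

lemma DD_limit:
  fixes F :: "nat \<Rightarrow> complex \<Rightarrow> 'q::t2_space \<Rightarrow> complex" and a0 :: "nat \<Rightarrow> complex"
  assumes hol: "\<And>j q. (\<lambda>w. F j w q) holomorphic_on UNIV"
    and cont: "\<And>j. continuous_on UNIV (\<lambda>(w,q). F j w q)"
  shows "\<exists>L. ((\<lambda>x. Determinant.det (Matrix.mat n n (\<lambda>(i,j). F j (fst x i) (snd x))) / Vdm n (fst x)) \<longlongrightarrow> L)
           (at (a0,q0) within {x. \<forall>i<n. \<forall>j<n. i\<noteq>j \<longrightarrow> fst x i \<noteq> fst x j})"
proof -
  define R where "R = 1 + (\<Sum>i<n. norm (a0 i))"
  have R: "\<forall>b<n. norm (a0 b) < R"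
  proof (intro allI impI)
    fix b assume "b < n"
    hence "norm (a0 b) \<le> (\<Sum>i<n. norm (a0 i))"
      by (intro member_le_sum) auto
    thus "norm (a0 b) < R" unfolding R_def by simp
  qed
  let ?D = "\<lambda>x. Determinant.det (Matrix.mat n n (\<lambda>(m,j). DDe R (F j) m (fst x) (snd x)))"
  let ?s = "(\<Prod>m<n. (-1::complex)^m)"
  have t: "(?D \<longlongrightarrow> Determinant.det (Matrix.mat n n (\<lambda>(m,j). DDe R (F j) m a0 q0))) (nhds (a0,q0))"
  proof (rule det_tendsto)
    fix i j assume "i < n" "j < n"
    hence "\<forall>b\<le>i. norm (a0 b) < R" using R by auto
    thus "((\<lambda>x. DDe R (F j) i (fst x) (snd x)) \<longlongrightarrow> DDe R (F j) i a0 q0) (nhds (a0, q0))"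
      by (rule DDe_cont[OF cont])
  qed
  hence t': "((\<lambda>x. ?s * ?D x) \<longlongrightarrow> ?s * Determinant.det (Matrix.mat n n (\<lambda>(m,j). DDe R (F j) m a0 q0)))
      (at (a0,q0) within {x. \<forall>i<n. \<forall>j<n. i\<noteq>j \<longrightarrow> fst x i \<noteq> fst x j})"
    by (intro tendsto_intros tendsto_mono[OF at_within_le_nhds])
  have ev: "\<forall>\<^sub>F x in nhds (a0,q0). \<forall>b<n. norm (fst x b) < R"
  proof (cases n)
    case 0 then show ?thesis by simp
  next
    case (Suc m)
    have "\<forall>b\<le>m. norm (a0 b) < R" using R Suc by auto
    from ev_norm_lt[OF this, of q0] show ?thesis by (rule eventually_mono) (auto simp: Suc less_Suc_eq_le)
  qed
  have "\<forall>\<^sub>F x in at (a0,q0) within {x. \<forall>i<n. \<forall>j<n. i\<noteq>j \<longrightarrow> fst x i \<noteq> fst x j}.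
      ?s * ?D x = Determinant.det (Matrix.mat n n (\<lambda>(i,j). F j (fst x i) (snd x))) / Vdm n (fst x)"
  proof -
    have "\<forall>\<^sub>F x in at (a0,q0) within {x. \<forall>i<n. \<forall>j<n. i\<noteq>j \<longrightarrow> fst x i \<noteq> fst x j}. \<forall>b<n. norm (fst x b) < R"
      using ev by (rule filter_leD[OF at_within_le_nhds])
    moreover have "\<forall>\<^sub>F x in at (a0,q0) within {x. \<forall>i<n. \<forall>j<n. i\<noteq>j \<longrightarrow> fst x i \<noteq> fst x j}. \<forall>i<n. \<forall>j<n. i\<noteq>j \<longrightarrow> fst x i \<noteq> fst x j"
      by (simp add: eventually_at_filter)
    ultimately show ?thesis
    proof eventually_elim
      case (elim x)
      show ?case using DD_identity[where F=F and q="snd x", OF hol elim(2) elim(1)] by simp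
    qed
  qed
  from Lim_transform_eventually[OF t' this] show ?thesis by blast
qed



definition Fk :: "nat \<Rightarrow> (nat\<Rightarrow>real) \<Rightarrow> complex \<Rightarrow> nat \<Rightarrow> complex \<Rightarrow> (nat\<Rightarrow>complex) \<Rightarrow> complex" where
  "Fk k l p j w b = (if j < k then exp (p * (w - b j)) * (\<Prod>j'\<in>{..<k}-{j}. (w - b j'))
      else (\<Prod>j'<k. (w - b j')) * exp (w * complex_of_real (l (j - k))))"

lemma Fk_hol: "(\<lambda>w. Fk k l p j w b) holomorphic_on UNIV"
  by (cases "j < k") (auto simp: Fk_def intro!: holomorphic_intros)

lemma cont_snd_coord: "continuous_on S (\<lambda>x::complex \<times> (nat\<Rightarrow>complex). snd x j)"
  by (rule continuous_on_product_then_coordinatewise) (intro continuous_intros)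

lemma Fk_cont: "continuous_on UNIV (\<lambda>(w,b). Fk k l p j w b)"
  by (cases "j < k") (auto simp: Fk_def case_prod_unfold intro!: continuous_intros cont_snd_coord)

lemma Fk_eq: assumes "\<forall>j'<k. w \<noteq> b j'"
  shows "Fk k l p j w b = (\<Prod>j'<k. (w - b j')) * (if j < k then exp (p * (w - b j)) / (w - b j)
      else exp (w * complex_of_real (l (j - k))))"
proof (cases "j < k")
  case True
  have "(\<Prod>j'<k. (w - b j')) = (w - b j) * (\<Prod>j'\<in>{..<k}-{j}. (w - b j'))"
    using True by (subst prod.remove[of _ j]) auto
  then show ?thesis using True assms by (simp add: Fk_def)
qed (simp add: Fk_def)

lemma Bp_raw_Fk:
  assumes ab: "\<forall>i<N+k. \<forall>j<k. a i \<noteq> b j"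
  shows "Bp_raw N k l p a b = (-1)^(N*k) / Vdm k (\<lambda>j. - b j)
     * (Determinant.det (Matrix.mat (N+k) (N+k) (\<lambda>(i,j). Fk k l p j (a i) b)) / Vdm (N+k) a)"
proof -
  let ?M = "\<lambda>i j. (if j < k then exp (p * (a i - b j)) / (a i - b j) else exp (a i * complex_of_real (l (j - k))))"
  have "Matrix.mat (N+k) (N+k) (\<lambda>(i,j). Fk k l p j (a i) b) = Matrix.mat (N+k) (N+k) (\<lambda>(i,j). (\<Prod>j'<k. (a i - b j')) * 1 * ?M i j)"
    by (rule cong_mat) (use ab in \<open>auto simp: Fk_eq\<close>)
  hence "Determinant.det (Matrix.mat (N+k) (N+k) (\<lambda>(i,j). Fk k l p j (a i) b))
      = (\<Prod>i<N+k. \<Prod>j'<k. (a i - b j')) * Determinant.det (Matrix.mat (N+k) (N+k) (\<lambda>(i,j). ?M i j))"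
    using det_scale[of "N+k" "\<lambda>i. \<Prod>j'<k. (a i - b j')" "\<lambda>_. 1" ?M] by simp
  moreover have "Dprod (N + k) k a (\<lambda>j. - b j) = (\<Prod>i<N+k. \<Prod>j'<k. (a i - b j'))"
    unfolding Dprod_def by simp
  ultimately show ?thesis unfolding Bp_raw_def by (simp add: field_simps)
qed

lemma snd_coord_tendsto: "((\<lambda>x::(nat\<Rightarrow>complex)\<times>(nat\<Rightarrow>complex). snd x j) \<longlongrightarrow> snd x0 j) (at x0 within S)"
proof -
  have "continuous (at x0 within S) ((\<lambda>a. a j) \<circ> snd)"
    by (intro continuous_within_compose continuous_intros coord_cont_at)
  thus ?thesis by (simp add: continuous_within o_def)
qed

lemma Vdm_tendsto: "((\<lambda>x::(nat\<Rightarrow>complex)\<times>(nat\<Rightarrow>complex). Vdm k (\<lambda>j. - snd x j)) \<longlongrightarrow> Vdm k (\<lambda>j. - snd x0 j)) (at x0 within S)"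
  unfolding Vdm_def by (intro tendsto_intros snd_coord_tendsto)

lemma Bp_lim:
  assumes b0d: "\<forall>i<k. \<forall>j<k. i\<noteq>j \<longrightarrow> b0 i \<noteq> b0 j"
  shows "\<exists>L. ((\<lambda>(a,b). Bp_raw N k l p a b) \<longlongrightarrow> L) (at (a0,b0) within generic_pair (N+k) k)"
proof -
  let ?D = "{x::(nat\<Rightarrow>complex)\<times>(nat\<Rightarrow>complex). \<forall>i<N+k. \<forall>j<N+k. i\<noteq>j \<longrightarrow> fst x i \<noteq> fst x j}"
  obtain L1 where L1: "((\<lambda>x. Determinant.det (Matrix.mat (N+k) (N+k) (\<lambda>(i,j). Fk k l p j (fst x i) (snd x))) / Vdm (N+k) (fst x)) \<longlongrightarrow> L1)
       (at (a0,b0) within ?D)"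
    using DD_limit[where F="\<lambda>j w b. Fk k l p j w b" and n="N+k", OF Fk_hol Fk_cont] by blast
  have sub: "generic_pair (N+k) k \<subseteq> ?D" by (auto simp: generic_pair_def generic_pts_def)
  have L1': "((\<lambda>x. Determinant.det (Matrix.mat (N+k) (N+k) (\<lambda>(i,j). Fk k l p j (fst x i) (snd x))) / Vdm (N+k) (fst x)) \<longlongrightarrow> L1)
       (at (a0,b0) within generic_pair (N+k) k)"
    by (rule tendsto_within_subset[OF L1 sub])
  have V: "Vdm k (\<lambda>j. - b0 j) \<noteq> 0" by (rule Vdm_nz) (use b0d in auto)
  have t: "((\<lambda>x. (-1)^(N*k) / Vdm k (\<lambda>j. - snd x j) * (Determinant.det (Matrix.mat (N+k) (N+k) (\<lambda>(i,j). Fk k l p j (fst x i) (snd x))) / Vdm (N+k) (fst x)))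
     \<longlongrightarrow> (-1)^(N*k) / Vdm k (\<lambda>j. - b0 j) * L1) (at (a0,b0) within generic_pair (N+k) k)"
    using Vdm_tendsto[of k "(a0,b0)"] V by (intro tendsto_intros L1') auto
  have ev: "\<forall>\<^sub>F x in at (a0,b0) within generic_pair (N+k) k.
     (-1)^(N*k) / Vdm k (\<lambda>j. - snd x j) * (Determinant.det (Matrix.mat (N+k) (N+k) (\<lambda>(i,j). Fk k l p j (fst x i) (snd x))) / Vdm (N+k) (fst x))
     = (\<lambda>(a,b). Bp_raw N k l p a b) x"
    unfolding eventually_at_filter
    by (rule always_eventually) (auto simp: generic_pair_def Bp_raw_Fk)
  show ?thesis using Lim_transform_eventually[OF t ev] by blast
qed


lemma lim_compose_within:
  assumes f: "(f \<longlongrightarrow> L) (at y0 within T)" and g: "(g \<longlongrightarrow> y0) (at x0 within S)"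
    and gS: "\<forall>x\<in>S. x \<noteq> x0 \<longrightarrow> g x \<in> T \<and> g x \<noteq> y0"
  shows "((\<lambda>x. f (g x)) \<longlongrightarrow> L) (at x0 within S)"
proof -
  have "filterlim g (at y0 within T) (at x0 within S)"
    unfolding filterlim_at using g gS by (auto simp: eventually_at_filter)
  thus ?thesis using filterlim_compose[OF f] by blast
qed

lemma Bp_raw_0: "Bp_raw N 0 l p a b = B_raw N l a"
  by (simp add: Bp_raw_def B_raw_def Dprod_def Vdm_def)

lemma B_lim: "\<exists>L. (B_raw N l \<longlongrightarrow> L) (at a0 within generic_pts N)"
proof -
  obtain L where L: "((\<lambda>(a,b). Bp_raw N 0 l p a b) \<longlongrightarrow> L) (at (a0, \<lambda>_. 0) within generic_pair (N+0) 0)"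
    using Bp_lim[of 0 "\<lambda>_. 0" N l p a0] by auto
  have g: "((\<lambda>a. (a, \<lambda>_::nat. 0::complex)) \<longlongrightarrow> (a0, \<lambda>_. 0)) (at a0 within generic_pts N)"
    by (intro tendsto_intros)
  have "((\<lambda>a. (\<lambda>(a,b). Bp_raw N 0 l p a b) (a, \<lambda>_. 0)) \<longlongrightarrow> L) (at a0 within generic_pts N)"
    by (rule lim_compose_within[OF L g]) (auto simp: generic_pair_def generic_pts_def)
  thus ?thesis by (auto simp: Bp_raw_0)
qed

lemma Vdm_cong: "(\<And>i. i < n \<Longrightarrow> a i = a' i) \<Longrightarrow> Vdm n a = Vdm n a'"
  unfolding Vdm_def by (intro prod.cong refl) auto

lemma Dprod_cong: "(\<And>i. i < n \<Longrightarrow> a i = a' i) \<Longrightarrow> (\<And>j. j < m \<Longrightarrow> b j = b' j) \<Longrightarrow> Dprod n m a b = Dprod n m a' b'"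
  unfolding Dprod_def by (intro prod.cong refl) auto

lemma Bp_raw_cong:
  assumes "\<And>i. i < N+k \<Longrightarrow> a i = a' i" "\<And>j. j < k \<Longrightarrow> b j = b' j"
  shows "Bp_raw N k l p a b = Bp_raw N k l p a' b'"
proof -
  have "Dprod (N + k) k a (\<lambda>j. - b j) = Dprod (N + k) k a' (\<lambda>j. - b' j)" by (rule Dprod_cong) (use assms in auto)
  moreover have "Vdm (N+k) a = Vdm (N+k) a'" by (rule Vdm_cong) (use assms in auto)
  moreover have "Vdm k (\<lambda>j. - b j) = Vdm k (\<lambda>j. - b' j)" by (rule Vdm_cong) (use assms in auto)
  moreover have "Matrix.mat (N + k) (N + k) (\<lambda>(i,j).
          if j < k then exp (p * (a i - b j)) / (a i - b j)
          else exp (a i * complex_of_real (l (j - k)))) = Matrix.mat (N + k) (N + k) (\<lambda>(i,j).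
          if j < k then exp (p * (a' i - b' j)) / (a' i - b' j)
          else exp (a' i * complex_of_real (l (j - k))))"
    by (rule cong_mat) (use assms in auto)
  ultimately show ?thesis unfolding Bp_raw_def by simp
qed

lemma B_raw_cong: "(\<And>i. i < N \<Longrightarrow> a i = a' i) \<Longrightarrow> B_raw N l a = B_raw N l a'"
  using Bp_raw_cong[of N 0 a a' "\<lambda>_. 0" "\<lambda>_. 0" l p] by (simp add: Bp_raw_0)

lemma Bp_raw_trunc: "Bp_raw N k l p (trunc_vec (N+k) a) (trunc_vec k b) = Bp_raw N k l p a b"
  by (rule Bp_raw_cong) (auto simp: trunc_vec_def)

lemma Bp_raw_trunc1: "Bp_raw N (Suc 0) l p (trunc_vec (Suc N) a) (trunc_vec (Suc 0) b) = Bp_raw N (Suc 0) l p a b"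
  using Bp_raw_trunc[of N 1 l p a b] by simp

lemma B_raw_trunc: "B_raw N l (trunc_vec N a) = B_raw N l a"
  by (rule B_raw_cong) (auto simp: trunc_vec_def)


lemma nontriv:
  fixes xi u v :: "nat \<Rightarrow> complex"
  assumes N: "N > 0"
  shows "trunc_vec N xi islimpt {z. z \<in> generic_pts N \<and> (\<forall>m<N. \<forall>i<k. z m \<noteq> u i \<and> z m \<noteq> v i)}"
    (is "_ islimpt ?S")
proof -
  define zt where "zt t = trunc_vec N (\<lambda>m. xi m + complex_of_real t * of_nat (Suc m))" for t :: real
  define Fin where "Fin = (\<lambda>(m,m'). (xi m - xi m') / (of_nat m' - of_nat m)) ` ({..<N}\<times>{..<N})
     \<union> (\<lambda>(m,i). (u i - xi m) / of_nat (Suc m)) ` ({..<N}\<times>{..<k})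
     \<union> (\<lambda>(m,i). (v i - xi m) / of_nat (Suc m)) ` ({..<N}\<times>{..<k})"
  have finF: "finite Fin" unfolding Fin_def by auto
  define Bad where "Bad = insert 0 (complex_of_real -` Fin)"
  have finB: "finite Bad" unfolding Bad_def
    by (intro finite_insert[THEN iffD2] finite_vimageI finF) (auto simp: inj_on_def)
  have good: "zt t \<in> ?S - {trunc_vec N xi}" if "t \<notin> Bad" for t
  proof -
    have t0: "t \<noteq> 0" and tF: "complex_of_real t \<notin> Fin" using that unfolding Bad_def by auto
    have d: "xi m + complex_of_real t * of_nat (Suc m) \<noteq> xi m' + complex_of_real t * of_nat (Suc m')"
      if "m < N" "m' < N" "m \<noteq> m'" for m m'
    proof
      assume h: "xi m + complex_of_real t * of_nat (Suc m) = xi m' + complex_of_real t * of_nat (Suc m')"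
      have nz: "(of_nat m' - of_nat m :: complex) \<noteq> 0" using that by auto
      from h have "complex_of_real t * (of_nat m' - of_nat m) = xi m - xi m'" by (simp add: algebra_simps)
      hence "complex_of_real t = (xi m - xi m') / (of_nat m' - of_nat m)" using nz by (simp add: field_simps)
      hence "complex_of_real t \<in> Fin" unfolding Fin_def using that by force
      thus False using tF by simp
    qed
    have du: "xi m + complex_of_real t * of_nat (Suc m) \<noteq> w"
      if "m < N" "i < k" "w = u i \<or> w = v i" for m i w
    proof
      assume h: "xi m + complex_of_real t * of_nat (Suc m) = w"
      have nz: "(of_nat (Suc m) :: complex) \<noteq> 0" by (simp only: of_nat_eq_0_iff nat.simps(3) not_False_eq_True)
      from h have "complex_of_real t = (w - xi m) / of_nat (Suc m)" using nz by (simp add: field_simps)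
      hence "complex_of_real t \<in> Fin" unfolding Fin_def using that by force
      thus False using tF by simp
    qed
    have "zt t 0 \<noteq> trunc_vec N xi 0" using N t0 by (simp add: zt_def trunc_vec_def)
    hence "zt t \<noteq> trunc_vec N xi" by metis
    moreover have "zt t \<in> ?S"
      using d du by (auto simp: zt_def trunc_vec_def generic_pts_def)
    ultimately show ?thesis by simp
  qed
  have "\<exists>t. t \<in> {0<..<inverse (real (Suc n))} - Bad" for n
  proof -
    have "infinite ({0<..<inverse (real (Suc n))} - Bad)" using finB by (simp add: Diff_infinite_finite)
    hence "{0<..<inverse (real (Suc n))} - Bad \<noteq> {}" by (metis finite.emptyI)
    thus ?thesis by blast
  qed
  then obtain tn where tn: "\<And>n. tn n \<in> {0<..<inverse (real (Suc n))} - Bad" by metis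
  have tlim: "tn \<longlonglongrightarrow> 0"
  proof (rule tendsto_sandwich[OF _ _ tendsto_const LIMSEQ_inverse_real_of_nat])
    show "\<forall>\<^sub>F n in sequentially. 0 \<le> tn n" using tn by (auto intro!: always_eventually less_imp_le)
    show "\<forall>\<^sub>F n in sequentially. tn n \<le> inverse (real (Suc n))" using tn by (auto intro!: always_eventually less_imp_le)
  qed
  have ztc: "continuous_on UNIV zt"
  proof (rule continuous_on_coordinatewise_then_product)
    fix i show "continuous_on UNIV (\<lambda>t. zt t i)"
      by (cases "i < N") (auto simp: zt_def trunc_vec_def intro!: continuous_intros)
  qed
  have "(\<lambda>n. zt (tn n)) \<longlonglongrightarrow> zt 0"
    by (rule continuous_on_tendsto_compose[OF ztc tlim]) auto
  moreover have "zt 0 = trunc_vec N xi" by (simp add: zt_def)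
  ultimately have "(\<lambda>n. zt (tn n)) \<longlonglongrightarrow> trunc_vec N xi" by simp
  moreover have "\<forall>n. zt (tn n) \<in> ?S - {trunc_vec N xi}" using tn good by blast
  ultimately show ?thesis unfolding islimpt_sequential by (intro exI[of _ "\<lambda>n. zt (tn n)"]) blast
qed



lemma gp_mem:
  assumes zd: "\<forall>i<N. \<forall>j<N. i\<noteq>j \<longrightarrow> z i \<noteq> z j"
    and uz: "\<forall>i<k. \<forall>m<N. u i \<noteq> z m" and vz: "\<forall>j<k. \<forall>m<N. v j \<noteq> z m"
    and uv: "\<forall>i<k. \<forall>j<k. u i \<noteq> v j"
    and ud: "\<forall>i<k. \<forall>j<k. i\<noteq>j \<longrightarrow> u i \<noteq> u j" and vd: "\<forall>i<k. \<forall>j<k. i\<noteq>j \<longrightarrow> v i \<noteq> v j"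
  shows "(trunc_vec (N+k) (concat_vec k u z), trunc_vec k v) \<in> generic_pair (N+k) k"
proof -
  have a: "trunc_vec (N+k) (concat_vec k u z) \<in> generic_pts (N+k)"
    unfolding generic_pts_def
  proof (intro CollectI conjI allI impI)
    fix i j assume ij: "i < N+k" "j < N+k" "i \<noteq> j"
    show "trunc_vec (N + k) (concat_vec k u z) i \<noteq> trunc_vec (N + k) (concat_vec k u z) j"
    proof (cases "i < k"; cases "j < k")
      assume "i < k" "j < k" thus ?thesis using ij ud by (simp add: trunc_vec_def concat_vec_def)
    next
      assume "i < k" "\<not> j < k" thus ?thesis using ij uz by (simp add: trunc_vec_def concat_vec_def)
    next
      assume a: "\<not> i < k" "j < k"
      hence "i - k < N" using ij by auto
      hence "u j \<noteq> z (i - k)" using uz a(2) by blast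
      hence "z (i - k) \<noteq> u j" by metis
      thus ?thesis using a ij by (simp add: trunc_vec_def concat_vec_def)
    next
      assume "\<not> i < k" "\<not> j < k"
      hence "i - k \<noteq> j - k" "i - k < N" "j - k < N" using ij by auto
      thus ?thesis using \<open>\<not> i < k\<close> \<open>\<not> j < k\<close> ij zd by (simp add: trunc_vec_def concat_vec_def)
    qed
  qed (simp add: trunc_vec_def)
  have b: "trunc_vec k v \<in> generic_pts k" using vd by (auto simp: generic_pts_def trunc_vec_def)
  have c: "\<forall>i<N+k. \<forall>j<k. trunc_vec (N+k) (concat_vec k u z) i \<noteq> trunc_vec k v j"
  proof (intro allI impI)
    fix i j assume "i < N+k" "j < k"
    thus "trunc_vec (N+k) (concat_vec k u z) i \<noteq> trunc_vec k v j"
    proof (cases "i < k")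
      case True thus ?thesis using uv \<open>j < k\<close> by (simp add: trunc_vec_def concat_vec_def)
    next
      case False
      hence "i - k < N" using \<open>i < N+k\<close> by auto
      hence "v j \<noteq> z (i - k)" using vz \<open>j < k\<close> by blast
      thus ?thesis using False \<open>i < N+k\<close> \<open>j < k\<close> by (simp add: trunc_vec_def concat_vec_def)
    qed
  qed
  show ?thesis using a b c by (simp add: generic_pair_def)
qed

lemma Bfun_lim:
  assumes ng: "trunc_vec N xi \<notin> generic_pts N" and S: "S \<subseteq> generic_pts N"
    and nt: "at (trunc_vec N xi) within S \<noteq> bot"
  shows "(B_raw N l \<longlongrightarrow> B_fun N l xi) (at (trunc_vec N xi) within S)"
proof -
  obtain L where L: "(B_raw N l \<longlongrightarrow> L) (at (trunc_vec N xi) within generic_pts N)" using B_lim by blast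
  have nt': "at (trunc_vec N xi) within generic_pts N \<noteq> bot"
    using nt S by (metis at_le bot.extremum_uniqueI)
  have "B_fun N l xi = L" unfolding B_fun_def using ng tendsto_Lim[OF nt' L] by simp
  thus ?thesis using tendsto_within_subset[OF L S] by simp
qed

lemma Bpfun_lim:
  fixes u v xi :: "nat \<Rightarrow> complex" and N k :: nat
  defines "S \<equiv> {z. z \<in> generic_pts N \<and> (\<forall>m<N. \<forall>i<k. z m \<noteq> u i \<and> z m \<noteq> v i)}"
  assumes ng: "trunc_vec N xi \<notin> generic_pts N"
    and nt: "at (trunc_vec N xi) within S \<noteq> bot"
    and uv: "\<forall>i<k. \<forall>j<k. u i \<noteq> v j"
    and ud: "\<forall>i<k. \<forall>j<k. i\<noteq>j \<longrightarrow> u i \<noteq> u j" and vd: "\<forall>i<k. \<forall>j<k. i\<noteq>j \<longrightarrow> v i \<noteq> v j"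
  shows "((\<lambda>z. Bp_raw N k l p (concat_vec k u z) v) \<longlongrightarrow> Bp_fun N k l p (concat_vec k u xi) v) (at (trunc_vec N xi) within S)"
proof -
  define P0 where "P0 = (trunc_vec (N+k) (concat_vec k u xi), trunc_vec k v)"
  define g where "g z = (trunc_vec (N+k) (concat_vec k u z), trunc_vec k v)" for z
  obtain L where L: "((\<lambda>(a,b). Bp_raw N k l p a b) \<longlongrightarrow> L) (at P0 within generic_pair (N+k) k)"
    using Bp_lim[of k "trunc_vec k v" N l p "trunc_vec (N+k) (concat_vec k u xi)"] vd
    unfolding P0_def by (auto simp: trunc_vec_def)
  have gP0: "g (trunc_vec N xi) = P0"
    unfolding g_def P0_def by (auto simp: trunc_vec_def concat_vec_def fun_eq_iff)
  have gc: "continuous_on UNIV (\<lambda>z. trunc_vec (N+k) (concat_vec k u z))"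
  proof (rule continuous_on_coordinatewise_then_product)
    fix i show "continuous_on UNIV (\<lambda>z. trunc_vec (N+k) (concat_vec k u z) i)"
      by (cases "i < N+k"; cases "i < k") (auto simp: trunc_vec_def concat_vec_def)
  qed
  have gt: "(g \<longlongrightarrow> P0) (at (trunc_vec N xi) within S)"
  proof -
    have "((\<lambda>z. trunc_vec (N+k) (concat_vec k u z)) \<longlongrightarrow> trunc_vec (N+k) (concat_vec k u (trunc_vec N xi))) (at (trunc_vec N xi) within S)"
    proof -
      have "isCont (\<lambda>z. trunc_vec (N+k) (concat_vec k u z)) (trunc_vec N xi)"
        using gc continuous_on_eq_continuous_at open_UNIV by blast
      hence "continuous (at (trunc_vec N xi) within S) (\<lambda>z. trunc_vec (N+k) (concat_vec k u z))"
        by (rule continuous_at_imp_continuous_at_within)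
      thus ?thesis by (simp add: continuous_within)
    qed
    hence "(g \<longlongrightarrow> g (trunc_vec N xi)) (at (trunc_vec N xi) within S)"
      unfolding g_def by (intro tendsto_intros)
    thus ?thesis using gP0 by simp
  qed
  have gS: "\<forall>z\<in>S. z \<noteq> trunc_vec N xi \<longrightarrow> g z \<in> generic_pair (N+k) k \<and> g z \<noteq> P0"
  proof (intro ballI impI conjI)
    fix z assume z: "z \<in> S" and zne: "z \<noteq> trunc_vec N xi"
    have zd: "\<forall>i<N. \<forall>j<N. i\<noteq>j \<longrightarrow> z i \<noteq> z j" and z0: "\<forall>i\<ge>N. z i = 0"
      using z unfolding S_def generic_pts_def by auto
    have zu: "\<forall>i<k. \<forall>m<N. u i \<noteq> z m" and zv: "\<forall>j<k. \<forall>m<N. v j \<noteq> z m"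
      using z unfolding S_def by (metis (mono_tags, lifting) mem_Collect_eq)+
    show "g z \<in> generic_pair (N+k) k" unfolding g_def
      by (rule gp_mem[OF zd zu zv uv ud vd])
    show "g z \<noteq> P0"
    proof
      assume "g z = P0"
      hence "\<And>m. m < N \<Longrightarrow> z m = xi m"
        unfolding g_def P0_def by (metis (no_types, lifting) add.commute add_diff_cancel_left' concat_vec_def fst_conv
            le_add1 not_less trunc_vec_def nat_add_left_cancel_less)
      hence "z = trunc_vec N xi" using z0 by (auto simp: trunc_vec_def)
      thus False using zne by simp
    qed
  qed
  have comp: "((\<lambda>z. (\<lambda>(a,b). Bp_raw N k l p a b) (g z)) \<longlongrightarrow> L) (at (trunc_vec N xi) within S)"
    by (rule lim_compose_within[OF L gt gS])
  have fl: "filterlim g (at P0 within generic_pair (N+k) k) (at (trunc_vec N xi) within S)"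
    unfolding filterlim_at using gt gS by (auto simp: eventually_at_filter)
  have nt': "at P0 within generic_pair (N+k) k \<noteq> bot"
  proof
    assume "at P0 within generic_pair (N+k) k = bot"
    hence "filtermap g (at (trunc_vec N xi) within S) \<le> bot" using fl by (simp add: filterlim_def)
    hence "filtermap g (at (trunc_vec N xi) within S) = bot" by (rule bot.extremum_uniqueI)
    thus False using nt by (simp add: filtermap_bot_iff)
  qed
  have ngp: "P0 \<notin> generic_pair (N+k) k"
  proof
    assume "P0 \<in> generic_pair (N+k) k"
    hence d: "\<forall>i<N+k. \<forall>j<N+k. i\<noteq>j \<longrightarrow> trunc_vec (N+k) (concat_vec k u xi) i \<noteq> trunc_vec (N+k) (concat_vec k u xi) j"
      unfolding P0_def generic_pair_def generic_pts_def by auto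
    have "trunc_vec N xi \<in> generic_pts N"
      unfolding generic_pts_def
    proof (intro CollectI conjI allI impI)
      fix i j assume "i < N" "j < N" "i \<noteq> j"
      thus "trunc_vec N xi i \<noteq> trunc_vec N xi j"
        using d[rule_format, of "k+i" "k+j"] by (simp add: trunc_vec_def concat_vec_def)
    qed (simp add: trunc_vec_def)
    thus False using ng by simp
  qed
  have "Bp_fun N k l p (concat_vec k u xi) v = L"
    unfolding Bp_fun_def using ngp tendsto_Lim[OF nt' L] by (simp add: P0_def)
  moreover have "(\<lambda>(a,b). Bp_raw N k l p a b) (g z) = Bp_raw N k l p (concat_vec k u z) v" for z
    unfolding g_def by (simp add: Bp_raw_trunc)
  ultimately show ?thesis using comp by simp
qed


lemma detA_nz: "B_raw N l z \<noteq> 0 \<Longrightarrow> Determinant.det (A_mat N l z) \<noteq> 0"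
  unfolding B_raw_def A_mat_def by auto

lemma part1:
  assumes B_nz: "B_fun N l xi \<noteq> 0"
    and uz: "\<forall>i<k. \<forall>j<N. u i \<noteq> xi j \<and> v i \<noteq> xi j"
    and dd: "\<forall>i<k. \<forall>j<k. i \<noteq> j \<longrightarrow> u i \<noteq> u j \<and> v i \<noteq> v j"
    and uv: "\<forall>i<k. \<forall>j<k. u i \<noteq> v j"
  shows "Bp_fun N k l p (concat_vec k u xi) v / B_fun N l xi =
       Dprod k k u (\<lambda>j. - v j) / (Vdm k u * Vdm k (\<lambda>j. - v j))
       * Determinant.det (Matrix.mat k k (\<lambda>(i,j). 1 / (u i - v j)
           * (Bp_fun N 1 l p (concat_vec 1 (\<lambda>_. u i) xi) (\<lambda>_. v j) / B_fun N l xi)))"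
proof -
  have ud: "\<forall>i<k. \<forall>j<k. i\<noteq>j \<longrightarrow> u i \<noteq> u j" and vd: "\<forall>i<k. \<forall>j<k. i\<noteq>j \<longrightarrow> v i \<noteq> v j"
    using dd by auto
  show ?thesis
  proof (cases "trunc_vec N xi \<in> generic_pts N")
    case True
    have xd: "\<forall>i<N. \<forall>j<N. i\<noteq>j \<longrightarrow> xi i \<noteq> xi j"
      using True by (auto simp: generic_pts_def trunc_vec_def)
    have Bf: "B_fun N l xi = B_raw N l xi" unfolding B_fun_def using True by (simp add: B_raw_trunc)
    have Bpk: "Bp_fun N k l p (concat_vec k u xi) v = Bp_raw N k l p (concat_vec k u xi) v"
      unfolding Bp_fun_def using gp_mem[OF xd _ _ uv ud vd] uz by (simp add: Bp_raw_trunc)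
    have Bp1: "Bp_fun N 1 l p (concat_vec 1 (\<lambda>_. u i) xi) (\<lambda>_. v j) = Bp_raw N 1 l p (concat_vec 1 (\<lambda>_. u i) xi) (\<lambda>_. v j)"
      if "i < k" "j < k" for i j
    proof -
      have "(trunc_vec (N+1) (concat_vec 1 (\<lambda>_. u i) xi), trunc_vec 1 (\<lambda>_. v j)) \<in> generic_pair (N+1) 1"
        by (rule gp_mem[OF xd]) (use that uz uv in auto)
      thus ?thesis unfolding Bp_fun_def by (simp add: Bp_raw_trunc1)
    qed
    have M: "Matrix.mat k k (\<lambda>(i,j). 1 / (u i - v j) * (Bp_fun N 1 l p (concat_vec 1 (\<lambda>_. u i) xi) (\<lambda>_. v j) / B_fun N l xi))
      = Matrix.mat k k (\<lambda>(i,j). 1 / (u i - v j) * (Bp_raw N 1 l p (concat_vec 1 (\<lambda>_. u i) xi) (\<lambda>_. v j) / B_raw N l xi))"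
      by (rule cong_mat) (auto simp: Bp1[simplified] Bf)
    have dA: "Determinant.det (A_mat N l xi) \<noteq> 0" using B_nz Bf detA_nz by simp
    show ?thesis unfolding M unfolding Bpk Bf
      by (rule gen_id[OF xd dA]) (use uz uv ud vd in auto)
  next
    case False
    define z0 where "z0 = trunc_vec N xi"
    define S where "S = {z. z \<in> generic_pts N \<and> (\<forall>m<N. \<forall>i<k. z m \<noteq> u i \<and> z m \<noteq> v i)}"
    have N: "N > 0"
    proof (rule ccontr)
      assume "\<not> N > 0" hence "N = 0" by simp
      hence "trunc_vec N xi \<in> generic_pts N" by (simp add: generic_pts_def trunc_vec_def)
      thus False using False by simp
    qed
    have nt: "at z0 within S \<noteq> bot"
      unfolding z0_def S_def using nontriv[OF N] trivial_limit_within by blast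
    have SS: "S \<subseteq> generic_pts N" unfolding S_def by auto
    have LB: "(B_raw N l \<longlongrightarrow> B_fun N l xi) (at z0 within S)"
      unfolding z0_def by (rule Bfun_lim[OF False SS]) (use nt z0_def in simp)
    have Lk: "((\<lambda>z. Bp_raw N k l p (concat_vec k u z) v) \<longlongrightarrow> Bp_fun N k l p (concat_vec k u xi) v) (at z0 within S)"
      unfolding z0_def S_def by (rule Bpfun_lim[OF False _ uv ud vd]) (use nt in \<open>simp add: z0_def S_def\<close>)
    have L1: "((\<lambda>z. Bp_raw N 1 l p (concat_vec 1 (\<lambda>_. u i) z) (\<lambda>_. v j)) \<longlongrightarrow> Bp_fun N 1 l p (concat_vec 1 (\<lambda>_. u i) xi) (\<lambda>_. v j)) (at z0 within S)"
      if ij: "i < k" "j < k" for i j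
    proof -
      define S1 where "S1 = {z. z \<in> generic_pts N \<and> (\<forall>m<N. \<forall>i'<(1::nat). z m \<noteq> u i \<and> z m \<noteq> v j)}"
      have sub: "S \<subseteq> S1" unfolding S_def S1_def using ij by auto
      have ex1: "(\<exists>i'::nat. i' < 1) \<longleftrightarrow> True" by auto
      have nt1: "at (trunc_vec N xi) within S1 \<noteq> bot"
        using nt sub unfolding z0_def by (metis at_le bot.extremum_uniqueI)
      have "((\<lambda>z. Bp_raw N 1 l p (concat_vec 1 (\<lambda>_. u i) z) (\<lambda>_. v j)) \<longlongrightarrow> Bp_fun N 1 l p (concat_vec 1 (\<lambda>_. u i) xi) (\<lambda>_. v j)) (at (trunc_vec N xi) within S1)"
        unfolding S1_def
        by (rule Bpfun_lim[where u="\<lambda>_. u i" and v="\<lambda>_. v j" and k=1 and N=N and xi=xi and l=l and p=p])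
           (use False nt1[unfolded S1_def] uv ij in auto)
      thus ?thesis unfolding z0_def by (rule tendsto_within_subset[OF _ sub])
    qed
    define RHS where "RHS z = Dprod k k u (\<lambda>j. - v j) / (Vdm k u * Vdm k (\<lambda>j. - v j))
       * Determinant.det (Matrix.mat k k (\<lambda>(i,j). 1 / (u i - v j)
           * (Bp_raw N 1 l p (concat_vec 1 (\<lambda>_. u i) z) (\<lambda>_. v j) / B_raw N l z)))" for z
    have t1: "((\<lambda>z. Bp_raw N k l p (concat_vec k u z) v / B_raw N l z) \<longlongrightarrow> Bp_fun N k l p (concat_vec k u xi) v / B_fun N l xi) (at z0 within S)"
      using Lk LB B_nz by (intro tendsto_intros)
    have t2: "(RHS \<longlongrightarrow> Dprod k k u (\<lambda>j. - v j) / (Vdm k u * Vdm k (\<lambda>j. - v j))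
       * Determinant.det (Matrix.mat k k (\<lambda>(i,j). 1 / (u i - v j)
           * (Bp_fun N 1 l p (concat_vec 1 (\<lambda>_. u i) xi) (\<lambda>_. v j) / B_fun N l xi)))) (at z0 within S)"
    proof -
      have ent: "((\<lambda>z. 1 / (u i - v j) * (Bp_raw N 1 l p (concat_vec 1 (\<lambda>_. u i) z) (\<lambda>_. v j) / B_raw N l z))
        \<longlongrightarrow> 1 / (u i - v j) * (Bp_fun N 1 l p (concat_vec 1 (\<lambda>_. u i) xi) (\<lambda>_. v j) / B_fun N l xi)) (at z0 within S)"
        if "i < k" "j < k" for i j
        using L1[OF that] LB B_nz by (intro tendsto_intros) auto
      have dt: "((\<lambda>z. Determinant.det (Matrix.mat k k (\<lambda>(i,j). 1 / (u i - v j) * (Bp_raw N 1 l p (concat_vec 1 (\<lambda>_. u i) z) (\<lambda>_. v j) / B_raw N l z))))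
         \<longlongrightarrow> Determinant.det (Matrix.mat k k (\<lambda>(i,j). 1 / (u i - v j) * (Bp_fun N 1 l p (concat_vec 1 (\<lambda>_. u i) xi) (\<lambda>_. v j) / B_fun N l xi)))) (at z0 within S)"
        by (rule det_tendsto[where f="\<lambda>z i j. 1 / (u i - v j) * (Bp_raw N 1 l p (concat_vec 1 (\<lambda>_. u i) z) (\<lambda>_. v j) / B_raw N l z)"
              and g="\<lambda>i j. 1 / (u i - v j) * (Bp_fun N 1 l p (concat_vec 1 (\<lambda>_. u i) xi) (\<lambda>_. v j) / B_fun N l xi)"])
           (rule ent)
      show ?thesis unfolding RHS_def by (intro tendsto_intros dt)
    qed
    have ev: "\<forall>\<^sub>F z in at z0 within S. Bp_raw N k l p (concat_vec k u z) v / B_raw N l z = RHS z"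
    proof -
      have "\<forall>\<^sub>F z in at z0 within S. B_raw N l z \<noteq> 0" using tendsto_imp_eventually_ne[OF LB B_nz] .
      moreover have "\<forall>\<^sub>F z in at z0 within S. z \<in> S" by (simp add: eventually_at_filter)
      ultimately show ?thesis
      proof eventually_elim
        case (elim z)
        have zd: "\<forall>i<N. \<forall>j<N. i\<noteq>j \<longrightarrow> z i \<noteq> z j" using elim(2) by (auto simp: S_def generic_pts_def)
        have zu: "\<forall>i<k. \<forall>m<N. u i \<noteq> z m" and zv: "\<forall>j<k. \<forall>m<N. v j \<noteq> z m"
          using elim(2) unfolding S_def by (metis (mono_tags, lifting) mem_Collect_eq)+
        show ?case unfolding RHS_def
          by (rule gen_id[OF zd detA_nz[OF elim(1)] zu zv uv ud vd])
      qed
    qed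
    have t1': "(RHS \<longlongrightarrow> Bp_fun N k l p (concat_vec k u xi) v / B_fun N l xi) (at z0 within S)"
      by (rule Lim_transform_eventually[OF t1 ev])
    show ?thesis using tendsto_unique[OF nt t1' t2] .
  qed
qed

theorem proposition3p3:
  fixes N k :: nat and l :: "nat \<Rightarrow> real" and p :: complex
    and xi u v :: "nat \<Rightarrow> complex"
  assumes l_W: "l \<in> weyl_chamber N"
    and B_nz: "B_fun N l xi \<noteq> 0"
  shows
    "((\<forall>i<k. \<forall>j<N. u i \<noteq> xi j \<and> v i \<noteq> xi j) \<and>
      (\<forall>i<k. \<forall>j<k. i \<noteq> j \<longrightarrow> u i \<noteq> u j \<and> v i \<noteq> v j) \<and>
      (\<forall>i<k. \<forall>j<k. u i \<noteq> v j) \<longrightarrow>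
     Bp_fun N k l p (concat_vec k u xi) v / B_fun N l xi =
       Dprod k k u (\<lambda>j. - v j) / (Vdm k u * Vdm k (\<lambda>j. - v j))
       * det (mat k k (\<lambda>(i,j). 1 / (u i - v j)
           * (Bp_fun N 1 l p (concat_vec 1 (\<lambda>_. u i) xi) (\<lambda>_. v j) / B_fun N l xi))))
    \<and>
    (\<forall>uu vv :: complex. (\<forall>i<N. \<forall>j<N. i \<noteq> j \<longrightarrow> xi i \<noteq> xi j) \<and>
       (\<forall>j<N. uu \<noteq> xi j \<and> vv \<noteq> xi j) \<and> uu \<noteq> vv \<and>
       invertible_mat (A_mat N l xi) \<longrightarrow>
     Bp_fun N 1 l p (concat_vec 1 (\<lambda>_. uu) xi) (\<lambda>_. vv) / B_fun N l xi =
       (uu - vv) * (\<Prod>i<N. (vv - xi i) / (uu - xi i))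
       * (exp (p * (uu - vv)) / (uu - vv)
          + vec N (\<lambda>j. exp (complex_of_real (l j) * uu))
            \<bullet> (the (mat_inverse (A_mat N l xi))
               *\<^sub>v vec N (\<lambda>i. exp (p * (xi i - vv)) / (vv - xi i)))))"
proof (intro conjI impI allI)
  assume H: "(\<forall>i<k. \<forall>j<N. u i \<noteq> xi j \<and> v i \<noteq> xi j) \<and>
      (\<forall>i<k. \<forall>j<k. i \<noteq> j \<longrightarrow> u i \<noteq> u j \<and> v i \<noteq> v j) \<and>
      (\<forall>i<k. \<forall>j<k. u i \<noteq> v j)"
  show "Bp_fun N k l p (concat_vec k u xi) v / B_fun N l xi =
       Dprod k k u (\<lambda>j. - v j) / (Vdm k u * Vdm k (\<lambda>j. - v j))
       * det (mat k k (\<lambda>(i,j). 1 / (u i - v j)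
           * (Bp_fun N 1 l p (concat_vec 1 (\<lambda>_. u i) xi) (\<lambda>_. v j) / B_fun N l xi)))"
    using part1[OF B_nz] H by blast
next
  fix uu vv :: complex
  assume H: "(\<forall>i<N. \<forall>j<N. i \<noteq> j \<longrightarrow> xi i \<noteq> xi j) \<and>
       (\<forall>j<N. uu \<noteq> xi j \<and> vv \<noteq> xi j) \<and> uu \<noteq> vv \<and>
       invertible_mat (A_mat N l xi)"
  have xd: "\<forall>i<N. \<forall>j<N. i\<noteq>j \<longrightarrow> xi i \<noteq> xi j" using H by blast
  have T: "trunc_vec N xi \<in> generic_pts N" using xd by (auto simp: generic_pts_def trunc_vec_def)
  have Bf: "B_fun N l xi = B_raw N l xi" unfolding B_fun_def using T by (simp add: B_raw_trunc)
  have "(trunc_vec (N+1) (concat_vec 1 (\<lambda>_. uu) xi), trunc_vec 1 (\<lambda>_. vv)) \<in> generic_pair (N+1) 1"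
    by (rule gp_mem[OF xd]) (use H in auto)
  hence Bp1: "Bp_fun N 1 l p (concat_vec 1 (\<lambda>_. uu) xi) (\<lambda>_. vv) = Bp_raw N 1 l p (concat_vec 1 (\<lambda>_. uu) xi) (\<lambda>_. vv)"
    unfolding Bp_fun_def by (simp add: Bp_raw_trunc1)
  have dA: "Determinant.det (A_mat N l xi) \<noteq> 0" using B_nz Bf detA_nz by simp
  show "Bp_fun N 1 l p (concat_vec 1 (\<lambda>_. uu) xi) (\<lambda>_. vv) / B_fun N l xi =
       (uu - vv) * (\<Prod>i<N. (vv - xi i) / (uu - xi i))
       * (exp (p * (uu - vv)) / (uu - vv)
          + vec N (\<lambda>j. exp (complex_of_real (l j) * uu))
            \<bullet> (the (mat_inverse (A_mat N l xi))
               *\<^sub>v vec N (\<lambda>i. exp (p * (xi i - vv)) / (vv - xi i))))"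
    unfolding Bp1 Bf by (rule part2_raw[OF xd dA]) (use H in auto)
qed


end
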